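(* Let $\varphi\in\mathrm{Diff}_{up}(\mathbb{C}^{n+1},0)$ and let $\gamma$ be a non-fibered irreducible component of $\mathrm{Fix}\,\varphi$. Then $Res_\gamma(\varphi)$ is a meromorphic function on $\gamma$, i.e. there are $A,B\in\mathbb{C}\{x,x_1,\dots,x_n\}$ with $B\not\equiv0$ on $\gamma$ such that $Res_\gamma(\varphi)=(A/B)|_\gamma$ wherever both are defined.
   Context: Coordinates $(x,x_1,\dots,x_n)$ on $\mathbb{C}^{n+1}$. $\mathrm{Diff}_{up}(\mathbb{C}^{n+1},0)$: germs of biholomorphisms $\varphi$ of $(\mathbb{C}^{n+1},0)$ with $x_j\circ\varphi=x_j$ ($1\le j\le n$) and $\frac{\partial(x\circ\varphi)}{\partial x}(0)=1$; $\mathrm{Fix}\,\varphi=\{x\circ\varphi=x\}$. An analytic germ is fibered if it is a union of local orbits of $\partial/\partial x$. For a fixed point $P$ near $0$, $\varphi_P$ is the germ at $x(P)$ of the one-variable map $t\mapsto x\circ\varphi(t,x_1(P),\dots,x_n(P))$. If $\partial(x\circ\varphi)/\partial x\equiv1$ on $\gamma$ (unipotent component): let $\nu_0$ be the minimum over $P\in\gamma$ of the order at $x(P)$ of $\varphi_P(t)-t$; for $P\in\gamma$ realizing $\nu_0$, $Res_\gamma(\varphi)(P)$ is the residue at $x(P)$ of the meromorphic 1-form $\omega$ with $\omega(X)=1$, where $X$ is any germ of holomorphic vector field formally conjugate to $\log\varphi_P$ (the unique formal nilpotent vector field whose time-one flow is $\varphi_P$); this is defined on the complement in $\gamma$ of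 a proper analytic subset. If $\gamma$ is not unipotent: $Res_\gamma(\varphi)(Q)=1/\ln\left(\frac{\partial(x\circ\varphi)}{\partial x}(Q)\right)$ for $Q\in\gamma$, with the branch of $\ln$ satisfying $\ln1=0$. *)

theory Defs
  imports "HOL-Complex_Analysis.Complex_Analysis"
          "HOL-Computational_Algebra.Formal_Power_Series"
          "HOL-Library.Extended_Nat"
begin

text \<open>Points of C^(n+1) are pairs (x, (x_1,...,x_n)) :: complex \<times> (complex^'n).
  A germ of phi in Diff_up is phi(x,y) = (g(x,y), y) with g holomorphic near 0,
  g 0 = 0 and dg/dx (0) = 1 (it is then automatically a local biholomorphism).\<close>

definition cscale :: "complex \<Rightarrow> complex \<times> (complex^'n) \<Rightarrow> complex \<times> (complex^'n)" where
  "cscale c p = (c * fst p, \<chi> i. c * (snd p $ i))"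

definition cholo_on :: "(complex \<times> (complex^'n)) set \<Rightarrow> (complex \<times> (complex^'n) \<Rightarrow> complex) \<Rightarrow> bool" where
  "cholo_on S f \<longleftrightarrow> open S \<and> (\<forall>p\<in>S. \<exists>L. (f has_derivative L) (at p) \<and>
       (\<forall>c v. L (cscale c v) = c * L v))"

definition partial_x :: "(complex \<times> (complex^'n) \<Rightarrow> complex) \<Rightarrow> complex \<times> (complex^'n) \<Rightarrow> complex" where
  "partial_x g P = deriv (\<lambda>t. g (t, snd P)) (fst P)"

definition germ_sub :: "(complex \<times> (complex^'n)) set \<Rightarrow> (complex \<times> (complex^'n)) set \<Rightarrow> bool" where
  "germ_sub A B \<longleftrightarrow> (\<exists>e>0. A \<inter> ball 0 e \<subseteq> B)"

definition germ_eq :: "(complex \<times> (complex^'n)) set \<Rightarrow> (complex \<times> (complex^'n)) set \<Rightarrow> bool" where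
  "germ_eq A B \<longleftrightarrow> germ_sub A B \<and> germ_sub B A"

definition analytic_germ :: "(complex \<times> (complex^'n)) set \<Rightarrow> bool" where
  "analytic_germ A \<longleftrightarrow> (\<exists>e>0. \<exists>F. finite F \<and> (\<forall>f\<in>F. cholo_on (ball 0 e) f) \<and>
       A \<inter> ball 0 e = {p\<in>ball 0 e. \<forall>f\<in>F. f p = 0})"

definition irreducible_germ :: "(complex \<times> (complex^'n)) set \<Rightarrow> bool" where
  "irreducible_germ A \<longleftrightarrow> analytic_germ A \<and> 0 \<in> A \<and>
     (\<forall>B C. analytic_germ B \<longrightarrow> analytic_germ C \<longrightarrow> germ_eq A (B \<union> C) \<longrightarrow>
        germ_eq A B \<or> germ_eq A C)"

definition irreducible_component_germ ::
  "(complex \<times> (complex^'n)) set \<Rightarrow> (complex \<times> (complex^'n)) set \<Rightarrow> bool" where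
  "irreducible_component_germ \<gamma> Z \<longleftrightarrow> irreducible_germ \<gamma> \<and> germ_sub \<gamma> Z \<and>
     (\<forall>\<delta>. irreducible_germ \<delta> \<longrightarrow> germ_sub \<gamma> \<delta> \<longrightarrow> germ_sub \<delta> Z \<longrightarrow> germ_eq \<delta> \<gamma>)"

text \<open>Fibered: union of local orbits of d/dx (in a small ball, the local orbit
  through p is the vertical disc through p).\<close>
definition fibered_germ :: "(complex \<times> (complex^'n)) set \<Rightarrow> bool" where
  "fibered_germ A \<longleftrightarrow> (\<exists>e>0. \<forall>p\<in>A \<inter> ball 0 e. \<forall>t. (t, snd p) \<in> ball 0 e \<longrightarrow> (t, snd p) \<in> A)"

definition ordat :: "(complex \<Rightarrow> complex) \<Rightarrow> complex \<Rightarrow> enat" where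
  "ordat h t0 = (if \<exists>k. (deriv ^^ k) h t0 \<noteq> 0
                 then enat (LEAST k. (deriv ^^ k) h t0 \<noteq> 0) else \<infinity>)"

definition taylor_fps :: "(complex \<Rightarrow> complex) \<Rightarrow> complex \<Rightarrow> complex fps" where
  "taylor_fps h t0 = Abs_fps (\<lambda>k. (deriv ^^ k) h t0 / fact k)"

text \<open>Formal time-one flow of a formal vector field L(s) d/ds with L of order \<ge> 2
  (Lie series of the coordinate s).\<close>
definition flow1 :: "complex fps \<Rightarrow> complex fps" where
  "flow1 L = Abs_fps (\<lambda>m. \<Sum>k\<le>m. fps_nth (((\<lambda>p. L * fps_deriv p) ^^ k) fps_X) m / fact k)"

definition nu :: "(complex \<times> (complex^'n) \<Rightarrow> complex) \<Rightarrow> complex \<times> (complex^'n) \<Rightarrow> enat" where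
  "nu g P = ordat (\<lambda>t. g (t, snd P) - t) (fst P)"

definition nu0 :: "(complex \<times> (complex^'n) \<Rightarrow> complex) \<Rightarrow> (complex \<times> (complex^'n)) set \<Rightarrow> enat" where
  "nu0 g \<gamma> = (SUP d\<in>{0<..}. INF P\<in>\<gamma> \<inter> ball 0 d. nu g P)"

definition unipotent_comp :: "(complex \<times> (complex^'n) \<Rightarrow> complex) \<Rightarrow> (complex \<times> (complex^'n)) set \<Rightarrow> bool" where
  "unipotent_comp g \<gamma> \<longleftrightarrow> (\<exists>e>0. \<forall>Q\<in>\<gamma> \<inter> ball 0 e. partial_x g Q = 1)"

text \<open>unip_res g gamma P rho: P realizes nu0 and rho is the residue at x(P) of the form
  omega with omega(X) = 1, for a holomorphic vector field X = f(t) d/dt near x(P)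
  formally conjugate (by a formal diffeomorphism h) to log phi_P, the formal
  nilpotent vector field L whose time-one flow is phi_P (all in the coordinate s = t - x(P)).\<close>
definition unip_res :: "(complex \<times> (complex^'n) \<Rightarrow> complex) \<Rightarrow> (complex \<times> (complex^'n)) set
      \<Rightarrow> complex \<times> (complex^'n) \<Rightarrow> complex \<Rightarrow> bool" where
  "unip_res g \<gamma> P \<rho> \<longleftrightarrow> nu g P = nu0 g \<gamma> \<and> nu g P \<noteq> \<infinity> \<and>
     (\<exists>f \<epsilon> L h. \<epsilon> > 0 \<and> f holomorphic_on ball (fst P) \<epsilon> \<and>
        fps_nth L 0 = 0 \<and> fps_nth L 1 = 0 \<and>
        flow1 L = taylor_fps (\<lambda>s. g (fst P + s, snd P) - fst P) 0 \<and>
        fps_nth h 0 = 0 \<and> fps_nth h 1 \<noteq> 0 \<and>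
        fps_compose L h = fps_deriv h * taylor_fps (\<lambda>s. f (fst P + s)) 0 \<and>
        \<rho> = residue (\<lambda>t. 1 / f t) (fst P))"

definition Res_rel :: "(complex \<times> (complex^'n) \<Rightarrow> complex) \<Rightarrow> (complex \<times> (complex^'n)) set
      \<Rightarrow> complex \<times> (complex^'n) \<Rightarrow> complex \<Rightarrow> bool" where
  "Res_rel g \<gamma> P \<rho> \<longleftrightarrow>
     (if unipotent_comp g \<gamma> then unip_res g \<gamma> P \<rho>
      else partial_x g P \<noteq> 1 \<and> \<rho> = 1 / Ln (partial_x g P))"

end

theory Submission
  imports Defs
begin


lemma cscale_1_0: "cscale h (1, 0) = (h, 0)"
  by (simp add: cscale_def vec_eq_iff)

lemma cscale_0_v: "cscale h (0, v) = (0, \<chi> i. h * v $ i)"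
  by (simp add: cscale_def)

lemma norm_cmul_vec: "norm (\<chi> i. (z::complex) * v $ i) = cmod z * norm (v::complex^'n)"
  by (simp add: norm_vec_def norm_mult L2_set_right_distrib)

lemma cholo_onD:
  assumes "cholo_on S G" "P \<in> S"
  shows "\<exists>L. (G has_derivative L) (at P) \<and> (\<forall>c v. L (cscale c v) = c * L v)"
  using assms unfolding cholo_on_def by blast

lemma cholo_open: "cholo_on S G \<Longrightarrow> open S"
  unfolding cholo_on_def by blast

lemma cholo_Gd:
  assumes "cholo_on S G"
  obtains Gd where "\<And>P. P \<in> S \<Longrightarrow> (G has_derivative Gd P) (at P)"
     "\<And>P c v. P \<in> S \<Longrightarrow> Gd P (cscale c v) = c * Gd P v"
proof -
  have "\<forall>P\<in>S. \<exists>L. (G has_derivative L) (at P) \<and> (\<forall>c v. L (cscale c v) = c * L v)"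
    using cholo_onD[OF assms] by blast
  then obtain Gd where "\<forall>P\<in>S. (G has_derivative Gd P) (at P) \<and> (\<forall>c v. Gd P (cscale c v) = c * Gd P v)"
    by metis
  then show ?thesis using that by blast
qed

lemma cholo_continuous: "cholo_on S G \<Longrightarrow> continuous_on S G"
  by (metis cholo_onD continuous_at_imp_continuous_on has_derivative_continuous)

lemma slice_deriv:
  assumes "(G has_derivative L) (at (t, y))" "\<forall>c v. L (cscale c v) = c * L v"
  shows "((\<lambda>s. G (s, y)) has_field_derivative L (1, 0)) (at t)"
proof -
  have d: "((\<lambda>s. (s, y)) has_derivative (\<lambda>h. (h, 0))) (at t)"
    by (auto intro!: derivative_eq_intros)
  have "((\<lambda>s. G (s, y)) has_derivative (\<lambda>h. L (h, 0))) (at t)"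
    using has_derivative_compose[OF d assms(1)] by (simp add: o_def)
  moreover have "(\<lambda>h. L (h, 0)) = (\<lambda>h. h * L (1, 0))"
    using assms(2) cscale_1_0 by metis
  ultimately show ?thesis by (simp add: has_field_derivative_def mult_commute_abs)
qed

lemma dir_deriv:
  fixes v :: "complex^'n"
  assumes "(G has_derivative L) (at (t, y0 + (\<chi> i. z * v $ i)))" "\<forall>c v. L (cscale c v) = c * L v"
  shows "((\<lambda>s. G (t, y0 + (\<chi> i. s * v $ i))) has_field_derivative L (0, v)) (at z)"
proof -
  have lin: "linear (\<lambda>s::complex. (\<chi> i. s * v $ i))"
    by (rule linearI) (auto simp: vec_eq_iff algebra_simps)
  have d0: "((\<lambda>s::complex. (\<chi> i. s * v $ i)) has_derivative (\<lambda>s. (\<chi> i. s * v $ i))) (at z)"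
    using lin by (simp add: linear_imp_has_derivative)
  have d: "((\<lambda>s. (t, y0 + (\<chi> i. s * v $ i))) has_derivative (\<lambda>h. (0, (\<chi> i. h * v $ i)))) (at z)"
    using d0 by (auto intro!: derivative_eq_intros)
  have "((\<lambda>s. G (t, y0 + (\<chi> i. s * v $ i))) has_derivative (\<lambda>h. L (0, (\<chi> i. h * v $ i)))) (at z)"
    using has_derivative_compose[OF d assms(1)] by (simp add: o_def)
  moreover have "(\<lambda>h. L (0, (\<chi> i. h * v $ i))) = (\<lambda>h. h * L (0, v))"
    using assms(2) cscale_0_v by metis
  ultimately show ?thesis by (simp add: has_field_derivative_def mult_commute_abs)
qed

lemma partial_x_eq:
  assumes "(G has_derivative L) (at P)" "\<forall>c v. L (cscale c v) = c * L v"
  shows "partial_x G P = L (1, 0)"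
proof -
  obtain t y where P: "P = (t, y)" by fastforce
  show ?thesis unfolding partial_x_def P
    using slice_deriv[OF assms[unfolded P]] by (simp add: DERIV_imp_deriv)
qed



lemma quad_rem:
  fixes \<phi> :: "complex \<Rightarrow> complex"
  assumes hol: "\<phi> holomorphic_on ball 0 R" and R: "R > 0"
    and bd: "\<forall>z\<in>ball 0 R. cmod (\<phi> z) \<le> M" and z: "cmod z \<le> R/4"
  shows "cmod (\<phi> z - \<phi> 0 - deriv \<phi> 0 * z) \<le> 8*(M+1)/R^2 * (cmod z)^2"
proof -
  define S where "S = cball (0::complex) (R/4)"
  have hd: "((deriv ^^ i) \<phi> has_field_derivative (deriv ^^ Suc i) \<phi> x) (at x within S)"
    if "x \<in> S" for i x
  proof -
    have "x \<in> ball 0 R" using that R by (auto simp: S_def)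
    moreover have "(deriv ^^ i) \<phi> holomorphic_on ball 0 R"
      by (rule holomorphic_higher_deriv[OF hol]) auto
    ultimately show ?thesis
      by (auto intro: holomorphic_derivI)
  qed
  have B: "cmod ((deriv ^^ Suc 1) \<phi> x) \<le> 8*(M+1)/R^2" if "x \<in> S" for x
  proof -
    have x: "cmod x \<le> R/4" using that by (auto simp: S_def)
    have sub: "cball x (R/2) \<subseteq> ball 0 R"
    proof
      fix w assume "w \<in> cball x (R/2)"
      then have "cmod (w - x) \<le> R/2" by (simp add: dist_norm norm_minus_commute)
      then have "cmod w \<le> cmod x + R/2" by (metis add.commute diff_add_cancel norm_triangle_le add_mono order_refl)
      then show "w \<in> ball 0 R" using x R by auto
    qed
    have "cmod ((deriv ^^ 2) \<phi> x) \<le> fact 2 * (M+1) / (R/2)^2"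
    proof (rule Cauchy_higher_deriv_bound)
      show "\<phi> holomorphic_on ball x (R/2)" using hol sub ball_subset_cball holomorphic_on_subset by blast
      show "continuous_on (cball x (R/2)) \<phi>"
        using holomorphic_on_imp_continuous_on[OF hol] sub continuous_on_subset by blast
      show "\<phi> w \<in> ball 0 (M+1)" if "w \<in> ball x (R/2)" for w
      proof -
      have "w \<in> ball 0 R" using sub that ball_subset_cball by blast
      then have "cmod (\<phi> w) \<le> M" using bd by blast
      then show ?thesis by (simp add: dist_norm)
    qed
    qed (use R in auto)
    also have "\<dots> = 8*(M+1)/R^2" by (simp add: power2_eq_square field_simps)
    finally show ?thesis by (simp add: numeral_2_eq_2)
  qed
  have "cmod ((deriv ^^ 0) \<phi> z - (\<Sum>i\<le>1. (deriv ^^ i) \<phi> 0 * (z - 0) ^ i / fact i))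
        \<le> 8*(M+1)/R^2 * cmod (z - 0) ^ Suc 1 / fact 1"
    by (rule complex_Taylor[where f="\<lambda>i. (deriv ^^ i) \<phi>" and S=S])
       (use hd B z R in \<open>auto simp: S_def\<close>)
  then show ?thesis by (simp add: power2_eq_square diff_diff_eq)
qed

lemma deriv_bnd:
  fixes \<phi> :: "complex \<Rightarrow> complex"
  assumes hol: "\<phi> holomorphic_on ball 0 R" and R: "R > 0"
    and bd: "\<forall>z\<in>ball 0 R. cmod (\<phi> z) \<le> M"
  shows "cmod (deriv \<phi> 0) \<le> 2*(M+1)/R"
proof -
  have sub: "cball 0 (R/2) \<subseteq> ball (0::complex) R" using R by auto
  have "cmod ((deriv ^^ 1) \<phi> 0) \<le> fact 1 * (M+1) / (R/2)^1"
  proof (rule Cauchy_higher_deriv_bound)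
    show "\<phi> holomorphic_on ball 0 (R/2)" using hol sub ball_subset_cball holomorphic_on_subset by blast
    show "continuous_on (cball 0 (R/2)) \<phi>"
      using holomorphic_on_imp_continuous_on[OF hol] sub continuous_on_subset by blast
    show "\<phi> w \<in> ball 0 (M+1)" if "w \<in> ball 0 (R/2)" for w
    proof -
      have "w \<in> ball 0 R" using sub that ball_subset_cball by blast
      then have "cmod (\<phi> w) \<le> M" using bd by blast
      then show ?thesis by (simp add: dist_norm)
    qed
  qed (use R in auto)
  then show ?thesis by (simp add: algebra_simps)
qed



lemma vec_scale_back:
  fixes w :: "complex^'n"
  assumes "w \<noteq> 0"
  shows "(\<chi> i. complex_of_real (norm w) * ((1 / norm w) *\<^sub>R w) $ i) = w"
proof -
  have "norm w \<noteq> 0" using assms by simp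
  then show ?thesis by (simp add: vec_eq_iff vector_scaleR_component scaleR_conv_of_real[where 'a=complex])
qed

lemma dir_est:
  fixes G :: "complex \<times> (complex^'n) \<Rightarrow> complex"
  assumes Gd: "\<And>P. P\<in>S \<Longrightarrow> (G has_derivative Gd P) (at P)"
    and Gdl: "\<And>P c v. P\<in>S \<Longrightarrow> Gd P (cscale c v) = c * Gd P v"
    and inS: "\<And>t y. cmod (t - xc) + norm (y - yc) < 4*\<delta> \<Longrightarrow> (t, y) \<in> S"
    and bd: "\<And>t y. cmod (t - xc) + norm (y - yc) < 4*\<delta> \<Longrightarrow> cmod (G (t, y)) \<le> M"
    and \<delta>: "\<delta> > 0" and t: "cmod (t - xc) \<le> 2*\<delta>"
  shows "cmod (Gd (t, yc) (0, w)) \<le> (M+1)/\<delta> * norm w"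
    and "norm w \<le> \<delta>/2 \<Longrightarrow> cmod (G (t, yc + w) - G (t, yc) - Gd (t, yc) (0, w)) \<le> 2*(M+1)/\<delta>^2 * (norm w)^2"
proof -
  have lin0: "Gd (t, yc) (0, 0) = 0"
  proof -
    have "(t, yc) \<in> S" using inS[of t yc] t \<delta> by auto
    then have "linear (Gd (t, yc))" using Gd has_derivative_linear by blast
    then show ?thesis using linear_0 by (metis zero_prod_def)
  qed
  have both: "cmod (Gd (t, yc) (0, w)) \<le> (M+1)/\<delta> * norm w \<and>
      (norm w \<le> \<delta>/2 \<longrightarrow> cmod (G (t, yc + w) - G (t, yc) - Gd (t, yc) (0, w)) \<le> 2*(M+1)/\<delta>^2 * (norm w)^2)"
  proof (cases "w = 0")
    case True
    then show ?thesis using lin0 by simp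
  next
    case False
    define v where "v = (1 / norm w) *\<^sub>R w"
    have nv: "norm v = 1" using False by (simp add: v_def)
    define \<phi> where "\<phi> = (\<lambda>z. G (t, yc + (\<chi> i. z * v $ i)))"
    have inS': "(t, yc + (\<chi> i. z * v $ i)) \<in> S" if "z \<in> ball 0 (2*\<delta>)" for z
    proof -
      have "norm (\<chi> i. z * v $ i) = cmod z" using norm_cmul_vec[of z v] nv by simp
      then show ?thesis using that t by (intro inS) auto
    qed
    have bd': "cmod (\<phi> z) \<le> M" if "z \<in> ball 0 (2*\<delta>)" for z
    proof -
      have "norm (\<chi> i. z * v $ i) = cmod z" using norm_cmul_vec[of z v] nv by simp
      then show ?thesis using that t unfolding \<phi>_def by (intro bd) auto
    qed
    have der: "(\<phi> has_field_derivative Gd (t, yc + (\<chi> i. z * v $ i)) (0, v)) (at z)"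
      if "z \<in> ball 0 (2*\<delta>)" for z
      unfolding \<phi>_def by (rule dir_deriv) (use Gd Gdl inS'[OF that] in auto)
    have hol: "\<phi> holomorphic_on ball 0 (2*\<delta>)"
      using der by (subst holomorphic_on_open) blast+
    have z0: "(\<chi> i. (0::complex) * v $ i) = 0" by (simp add: vec_eq_iff)
    have d0: "deriv \<phi> 0 = Gd (t, yc) (0, v)"
      using der[of 0] \<delta> z0 by (simp add: DERIV_imp_deriv)
    have phiw: "\<phi> (of_real (norm w)) = G (t, yc + w)"
      unfolding \<phi>_def v_def using vec_scale_back[OF False] by simp
    have Gdw: "Gd (t, yc) (0, w) = of_real (norm w) * Gd (t, yc) (0, v)"
    proof -
      have "(t, yc) \<in> S" using inS[of t yc] t \<delta> by auto
      then have "Gd (t, yc) (cscale (of_real (norm w)) (0, v)) = of_real (norm w) * Gd (t, yc) (0, v)"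
        using Gdl by blast
      moreover have "cscale (of_real (norm w)) (0, v) = (0, w)"
        unfolding cscale_0_v v_def using vec_scale_back[OF False] by simp
      ultimately show ?thesis by simp
    qed
    have phi0: "\<phi> 0 = G (t, yc)" unfolding \<phi>_def using z0 by simp
    have A: "cmod (Gd (t, yc) (0, w)) \<le> (M+1)/\<delta> * norm w"
    proof -
      have "cmod (deriv \<phi> 0) \<le> 2*(M+1)/(2*\<delta>)"
        by (rule deriv_bnd[OF hol]) (use \<delta> bd' in auto)
      moreover have "2*(M+1)/(2*\<delta>) = (M+1)/\<delta>" using \<delta> by (simp add: field_simps)
      ultimately have "cmod (Gd (t, yc) (0, v)) \<le> (M+1)/\<delta>" using d0 by simp
      then have "norm w * cmod (Gd (t, yc) (0, v)) \<le> norm w * ((M+1)/\<delta>)"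
        by (intro mult_left_mono) auto
      then show ?thesis unfolding Gdw norm_mult by (simp add: mult.commute)
    qed
    have B: "cmod (G (t, yc + w) - G (t, yc) - Gd (t, yc) (0, w)) \<le> 2*(M+1)/\<delta>^2 * (norm w)^2"
      if "norm w \<le> \<delta>/2"
    proof -
      have q: "cmod (\<phi> (of_real (norm w)) - \<phi> 0 - deriv \<phi> 0 * of_real (norm w))
          \<le> 8*(M+1)/(2*\<delta>)^2 * (cmod (of_real (norm w)))^2"
        by (rule quad_rem[OF hol]) (use \<delta> bd' that in auto)
      have e: "8*(M+1)/(2*\<delta>)^2 = 2*(M+1)/\<delta>^2" using \<delta> by (simp add: field_simps power2_eq_square)
      have e2: "deriv \<phi> 0 * of_real (norm w) = Gd (t, yc) (0, w)" using d0 Gdw by (simp add: mult.commute)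
      show ?thesis using q unfolding e e2 phiw phi0 norm_of_real abs_norm_cancel .
    qed
    show ?thesis using A B by blast
  qed
  then show "cmod (Gd (t, yc) (0, w)) \<le> (M+1)/\<delta> * norm w"
    and "norm w \<le> \<delta>/2 \<Longrightarrow> cmod (G (t, yc + w) - G (t, yc) - Gd (t, yc) (0, w)) \<le> 2*(M+1)/\<delta>^2 * (norm w)^2"
    by blast+
qed

lemma kernel_bound:
  fixes a u :: complex
  assumes "cmod a = 2*\<delta>" "cmod u \<le> \<delta>/2" "\<delta> > 0"
  shows "cmod (1/(a-u)^2) \<le> 1/\<delta>^2" and "cmod (1/(a-u)^2 - 1/a^2) \<le> 2*cmod u/\<delta>^3"
proof -
  have au: "cmod (a - u) \<ge> \<delta>"
    using norm_triangle_ineq2[of a u] assms by linarith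
  have a0: "a \<noteq> 0" and au0: "a - u \<noteq> 0" using assms au by auto
  show "cmod (1/(a-u)^2) \<le> 1/\<delta>^2"
    using au assms by (simp add: norm_divide norm_power divide_le_cancel power_mono frac_le)
  have eq: "1/(a-u)^2 - 1/a^2 = u * (2*a - u) / ((a-u)^2 * a^2)"
  proof -
    have "1/(a-u)^2 - 1/a^2 = (a^2 - (a-u)^2)/((a-u)^2*a^2)"
      using a0 au0 by (simp add: diff_frac_eq)
    moreover have "a^2 - (a-u)^2 = u*(2*a-u)" by (simp add: power2_eq_square algebra_simps)
    ultimately show ?thesis by simp
  qed
  have n1: "cmod (2*a - u) \<le> 5*\<delta>"
    using norm_triangle_ineq4[of "2*a" u] assms by (simp add: norm_mult)
  have n2: "cmod ((a-u)^2 * a^2) \<ge> \<delta>^2 * (4*\<delta>^2)"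
    unfolding norm_mult norm_power using assms au
    by (intro mult_mono power_mono) (auto simp: power2_eq_square)
  have "cmod (u * (2*a - u) / ((a-u)^2 * a^2)) = cmod u * cmod (2*a - u) / cmod ((a-u)^2 * a^2)"
    by (simp add: norm_mult norm_divide)
  also have "\<dots> \<le> cmod u * (5*\<delta>) / (\<delta>^2 * (4*\<delta>^2))"
    using n1 n2 assms by (intro frac_le mult_left_mono) auto
  also have "\<dots> \<le> 2*cmod u/\<delta>^3"
    using assms by (simp add: field_simps power2_eq_square power3_eq_cube)
  finally show "cmod (1/(a-u)^2 - 1/a^2) \<le> 2*cmod u/\<delta>^3" using eq by simp
qed



lemma Q_split: "(G1::complex)/q - G0/q - D/p = (G1 - G0 - D)/q + D*(1/q - 1/p)"
  by (simp add: diff_divide_distrib right_diff_distrib)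

lemma partial_x_cholo:
  fixes G :: "complex \<times> (complex^'n) \<Rightarrow> complex"
  assumes cG: "cholo_on S G"
  shows "cholo_on S (partial_x G)"
  unfolding cholo_on_def
proof (intro conjI ballI)
  show "open S" using cG cholo_open by blast
  fix P0 assume P0S: "P0 \<in> S"
  obtain x0 y0 where P0: "P0 = (x0, y0)" by fastforce
  obtain Gd where Gd: "\<And>P. P\<in>S \<Longrightarrow> (G has_derivative Gd P) (at P)"
    and Gdl: "\<And>P c v. P\<in>S \<Longrightarrow> Gd P (cscale c v) = c * Gd P v"
    using cholo_Gd[OF cG] by blast
  obtain \<rho>0 where \<rho>0: "\<rho>0 > 0" "cball P0 \<rho>0 \<subseteq> S"
    using open_contains_cball P0S cholo_open cG by blast
  define \<delta> where "\<delta> = \<rho>0/4"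
  have \<delta>: "\<delta> > 0" using \<rho>0 by (simp add: \<delta>_def)
  have inC: "(t,y) \<in> cball P0 \<rho>0" if "cmod (t-x0) + norm (y-y0) < 4*\<delta>" for t y
  proof -
    have "dist P0 (t,y) = norm (x0 - t, y0 - y)" by (simp add: P0 dist_norm)
    also have "\<dots> \<le> cmod (x0-t) + norm (y0-y)" by (rule norm_Pair_le)
    also have "\<dots> < \<rho>0" using that by (simp add: \<delta>_def norm_minus_commute)
    finally show ?thesis by simp
  qed
  have inS: "\<And>t y. cmod (t-x0) + norm (y-y0) < 4*\<delta> \<Longrightarrow> (t,y) \<in> S" using inC \<rho>0 by blast
  have contG: "continuous_on S G" by (rule cholo_continuous[OF cG])
  obtain M where M: "\<forall>P\<in>cball P0 \<rho>0. cmod (G P) \<le> M"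
  proof -
    have "compact (G ` cball P0 \<rho>0)"
      by (intro compact_continuous_image continuous_on_subset[OF contG \<rho>0(2)] compact_cball)
    then obtain M where "\<forall>z\<in>G ` cball P0 \<rho>0. norm z \<le> M" using compact_imp_bounded bounded_iff by metis
    then show ?thesis using that by auto
  qed
  have M0: "M \<ge> 0" using M \<rho>0 norm_ge_zero[of "G P0"] by (metis centre_in_cball less_imp_le order_trans)
  have bd: "\<And>t y. cmod (t-x0) + norm (y-y0) < 4*\<delta> \<Longrightarrow> cmod (G (t,y)) \<le> M" using inC M by blast
  have E1: "cmod (Gd (t,y0) (0,w)) \<le> (M+1)/\<delta> * norm w" if "cmod (t-x0) \<le> 2*\<delta>" for t w
    using Gd Gdl inS bd \<delta> that by (rule dir_est(1))
  have E2: "cmod (G (t, y0 + w) - G (t, y0) - Gd (t, y0) (0, w)) \<le> 2*(M+1)/\<delta>^2 * (norm w)^2"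
    if "cmod (t-x0) \<le> 2*\<delta>" "norm w \<le> \<delta>/2" for t w
    using Gd Gdl inS bd \<delta> that by (rule dir_est(2))
  have S0: "(t, y0) \<in> S" if "cmod (t-x0) \<le> 2*\<delta>" for t
    using inS[of t y0] that \<delta> by simp
  have slice_hol: "(\<lambda>s. G (s,y)) holomorphic_on ball x0 (3*\<delta>)" if "norm (y-y0) < \<delta>" for y
  proof (subst holomorphic_on_open)
    show "open (ball x0 (3*\<delta>))" by simp
    show "\<forall>t\<in>ball x0 (3 * \<delta>). \<exists>f'. ((\<lambda>s. G (s, y)) has_field_derivative f') (at t)"
    proof
      fix t assume "t \<in> ball x0 (3*\<delta>)"
      then have "cmod (t-x0) + norm (y-y0) < 4*\<delta>" using that by (simp add: dist_norm norm_minus_commute)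
      then show "\<exists>f'. ((\<lambda>s. G (s, y)) has_field_derivative f') (at t)"
        using slice_deriv Gd Gdl inS by blast
    qed
  qed
  define C where "C = circlepath x0 (2*\<delta>)"
  have pC: "path_image C = sphere x0 (2*\<delta>)" using \<delta> by (simp add: C_def)
  have cauchy: "((\<lambda>t. G (t,y) / (t - x)^2) has_contour_integral (2*pi*\<i>) * partial_x G (x,y)) C"
    if "cmod (x - x0) < 2*\<delta>" "norm (y-y0) < \<delta>" for x y
  proof -
    have hol3: "(\<lambda>s. G (s,y)) holomorphic_on ball x0 (3*\<delta>)" by (rule slice_hol[OF that(2)])
    have sub: "cball x0 (2*\<delta>) \<subseteq> ball x0 (3*\<delta>)" using \<delta> by auto
    have "((\<lambda>u. G (u,y) / (u-x)^Suc 1) has_contour_integral (2*pi*\<i>)/fact 1 * (deriv^^1) (\<lambda>s. G (s,y)) x) (circlepath x0 (2*\<delta>))"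
    proof (rule Cauchy_has_contour_integral_higher_derivative_circlepath)
      show "continuous_on (cball x0 (2 * \<delta>)) (\<lambda>s. G (s, y))"
        using holomorphic_on_imp_continuous_on[OF hol3] sub continuous_on_subset by blast
      show "(\<lambda>s. G (s, y)) holomorphic_on ball x0 (2 * \<delta>)"
        using hol3 sub ball_subset_cball holomorphic_on_subset by blast
      show "x \<in> ball x0 (2 * \<delta>)" using that by (simp add: dist_norm norm_minus_commute)
    qed
    then show ?thesis by (simp add: C_def partial_x_def power2_eq_square)
  qed
  have contD: "continuous_on (sphere x0 (2*\<delta>)) (\<lambda>t. Gd (t,y0) (0,w))" for w
  proof (rule uniform_limit_theorem[where F="at_right (0::real)"
        and f="\<lambda>s t. (G (t, y0 + s *\<^sub>R w) - G (t,y0)) / of_real s"])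
    show "\<forall>\<^sub>F s in at_right 0. continuous_on (sphere x0 (2 * \<delta>)) (\<lambda>t. (G (t, y0 + s *\<^sub>R w) - G (t,y0)) / of_real s)"
      unfolding eventually_at_right_field
    proof (intro exI[of _ "\<delta>/(norm w + 1)"] conjI allI impI)
      show "0 < \<delta>/(norm w + 1)" using \<delta> by (intro divide_pos_pos) (auto intro: add_nonneg_pos)
      fix s :: real assume s: "0 < s" "s < \<delta>/(norm w + 1)"
      have sw: "norm (s *\<^sub>R w) < \<delta>"
      proof -
        have "norm (s *\<^sub>R w) = s * norm w" using s by simp
        also have "\<dots> \<le> s * (norm w + 1)" using s by simp
        also have "\<dots> < \<delta>"
        proof -
          have n1: "0 < norm w + 1" by (intro add_nonneg_pos) auto
          show ?thesis using s(2) n1 by (simp only: pos_less_divide_eq)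
        qed
        finally show ?thesis .
      qed
      have img1: "(\<lambda>t. (t, y0 + s *\<^sub>R w)) ` sphere x0 (2*\<delta>) \<subseteq> S"
        using sw \<delta> by (auto intro!: inS simp: dist_norm norm_minus_commute)
      have img0: "(\<lambda>t. (t, y0)) ` sphere x0 (2*\<delta>) \<subseteq> S"
        using \<delta> by (auto intro!: inS simp: dist_norm norm_minus_commute)
      have c1: "continuous_on (sphere x0 (2*\<delta>)) (\<lambda>t. G (t, y0 + s *\<^sub>R w))"
        by (rule continuous_on_compose2[OF contG _ img1]) (intro continuous_intros)
      have c0: "continuous_on (sphere x0 (2*\<delta>)) (\<lambda>t. G (t, y0))"
        by (rule continuous_on_compose2[OF contG _ img0]) (intro continuous_intros)
      show "continuous_on (sphere x0 (2 * \<delta>)) (\<lambda>t. (G (t, y0 + s *\<^sub>R w) - G (t,y0)) / of_real s)"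
        using c1 c0 s by (intro continuous_intros) auto
    qed
    show "uniform_limit (sphere x0 (2 * \<delta>)) (\<lambda>s t. (G (t, y0 + s *\<^sub>R w) - G (t,y0)) / of_real s)
          (\<lambda>t. Gd (t, y0) (0, w)) (at_right 0)"
      unfolding uniform_limit_iff
    proof (intro allI impI)
      fix e :: real assume e: "e > 0"
      define K where "K = 2*(M+1)/\<delta>^2 * (norm w)^2 + 1"
      have K: "K > 0" unfolding K_def using M0 \<delta> by (intro add_nonneg_pos) auto
      show "\<forall>\<^sub>F s in at_right 0. \<forall>t\<in>sphere x0 (2 * \<delta>).
               dist ((G (t, y0 + s *\<^sub>R w) - G (t,y0)) / of_real s) (Gd (t, y0) (0, w)) < e"
        unfolding eventually_at_right_field
      proof (intro exI[of _ "min (\<delta>/(2*(norm w + 1))) (e/K)"] conjI allI impI ballI)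
        have "0 < \<delta>/(2*(norm w + 1))" using \<delta> by (intro divide_pos_pos) (auto intro: add_nonneg_pos)
        then show "0 < min (\<delta>/(2*(norm w + 1))) (e/K)" using e K by simp
        fix s :: real and t assume s: "0 < s" "s < min (\<delta>/(2*(norm w + 1))) (e/K)"
          and t: "t \<in> sphere x0 (2 * \<delta>)"
        have tt: "cmod (t - x0) \<le> 2*\<delta>" using t by (simp add: dist_norm norm_minus_commute)
        have sw: "norm (s *\<^sub>R w) \<le> \<delta>/2"
        proof -
          have "norm (s *\<^sub>R w) = s * norm w" using s by simp
          also have "\<dots> \<le> s * (norm w + 1)" using s by simp
          also have "\<dots> \<le> \<delta>/2"
          proof -
            have n1: "0 < 2*(norm w + 1)" by (intro mult_pos_pos add_nonneg_pos) auto
            have "s < \<delta>/(2*(norm w + 1))" using s(2) by simp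
            then have "s * (2*(norm w + 1)) < \<delta>" using n1 by (simp only: pos_less_divide_eq)
            then show ?thesis by (simp add: algebra_simps)
          qed
          finally show ?thesis .
        qed
        have lin: "bounded_linear (Gd (t, y0))" using Gd S0[OF tt] has_derivative_bounded_linear by blast
        have sc: "Gd (t,y0) (0, s *\<^sub>R w) = of_real s * Gd (t,y0) (0, w)"
        proof -
          have "(0::complex, s *\<^sub>R w) = s *\<^sub>R (0, w)" by simp
          then show ?thesis using linear.scaleR[OF bounded_linear.linear[OF lin], of s "(0,w)"] by (simp add: scaleR_conv_of_real)
        qed
        have "cmod (G (t, y0 + s *\<^sub>R w) - G (t, y0) - Gd (t, y0) (0, s *\<^sub>R w)) \<le> 2*(M+1)/\<delta>^2 * (norm (s *\<^sub>R w))^2"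
          by (rule E2[OF tt sw])
        also have "\<dots> = s * (s * (2*(M+1)/\<delta>^2 * (norm w)^2))" using s by (simp add: power2_eq_square)
        also have "\<dots> < s * e"
        proof -
          have "2*(M+1)/\<delta>^2 * (norm w)^2 < K" by (simp add: K_def)
          then have "s * (2*(M+1)/\<delta>^2 * (norm w)^2) < s * K" using s(1) by (rule mult_strict_left_mono)
          also have "\<dots> < e"
          proof -
            have "s < e/K" using s(2) by simp
            then show ?thesis using K by (simp only: pos_less_divide_eq)
          qed
          finally have "s * (2*(M+1)/\<delta>^2 * (norm w)^2) < e" .
          then show ?thesis using s(1) by (rule mult_strict_left_mono)
        qed
        finally have lt: "cmod (G (t, y0 + s *\<^sub>R w) - G (t, y0) - of_real s * Gd (t, y0) (0, w)) < s * e"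
          using sc by simp
        have "(G (t, y0 + s *\<^sub>R w) - G (t,y0)) / of_real s - Gd (t, y0) (0, w)
              = (G (t, y0 + s *\<^sub>R w) - G (t, y0) - of_real s * Gd (t, y0) (0, w)) / of_real s"
          using s by (simp add: field_simps)
        then have "dist ((G (t, y0 + s *\<^sub>R w) - G (t,y0)) / of_real s) (Gd (t, y0) (0, w))
             = cmod (G (t, y0 + s *\<^sub>R w) - G (t, y0) - of_real s * Gd (t, y0) (0, w)) / s"
          using s by (simp add: dist_norm norm_divide)
        also have "\<dots> < e" using lt s by (simp add: field_simps)
        finally show "dist ((G (t, y0 + s *\<^sub>R w) - G (t,y0)) / of_real s) (Gd (t, y0) (0, w)) < e" .
      qed
    qed
  qed simp

  have intD: "(\<lambda>t. Gd (t,y0) (0,w) / (t-x0)^2) contour_integrable_on C" for w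
    unfolding C_def
  proof (rule contour_integrable_continuous_circlepath)
    have "continuous_on (sphere x0 (2*\<delta>)) (\<lambda>t. Gd (t,y0) (0,w) / (t-x0)^2)"
      using contD \<delta> by (intro continuous_intros) auto
    then show "continuous_on (path_image (circlepath x0 (2 * \<delta>))) (\<lambda>t. Gd (t,y0) (0,w) / (t-x0)^2)"
      using \<delta> by simp
  qed
  define \<Psi> where "\<Psi> w = contour_integral C (\<lambda>t. Gd (t,y0) (0,w) / (t-x0)^2)" for w
  have has\<Psi>: "((\<lambda>t. Gd (t,y0) (0,w) / (t-x0)^2) has_contour_integral \<Psi> w) C" for w
    unfolding \<Psi>_def using intD has_contour_integral_integral by blast
  have Ston: "(t, y0) \<in> S" if "t \<in> path_image C" for t
    using that pC by (intro S0) (simp add: dist_norm norm_minus_commute)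
  have \<Psi>_add: "\<Psi> (a + b) = \<Psi> a + \<Psi> b" for a b
  proof -
    have "((\<lambda>t. Gd (t,y0) (0,a) / (t-x0)^2 + Gd (t,y0) (0,b) / (t-x0)^2) has_contour_integral (\<Psi> a + \<Psi> b)) C"
      by (rule has_contour_integral_add[OF has\<Psi> has\<Psi>])
    then have "((\<lambda>t. Gd (t,y0) (0,a+b) / (t-x0)^2) has_contour_integral (\<Psi> a + \<Psi> b)) C"
    proof (rule has_contour_integral_eq)
      fix t assume "t \<in> path_image C"
      then have lin: "bounded_linear (Gd (t, y0))" using Gd Ston has_derivative_bounded_linear by blast
      have "(0::complex, a + b) = (0, a) + (0, b)" by simp
      then show "Gd (t,y0) (0,a) / (t-x0)^2 + Gd (t,y0) (0,b) / (t-x0)^2 = Gd (t,y0) (0,a+b) / (t-x0)^2"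
        using linear_add[OF bounded_linear.linear[OF lin], of "(0,a)" "(0,b)"] by (simp add: add_divide_distrib)
    qed
    then show ?thesis using has\<Psi> has_contour_integral_unique by blast
  qed
  have \<Psi>_cmul: "\<Psi> (\<chi> i. c * w $ i) = c * \<Psi> w" for c w
  proof -
    have "((\<lambda>t. c * (Gd (t,y0) (0,w) / (t-x0)^2)) has_contour_integral (c * \<Psi> w)) C"
      by (rule has_contour_integral_lmul[OF has\<Psi>])
    then have "((\<lambda>t. Gd (t,y0) (0, \<chi> i. c * w $ i) / (t-x0)^2) has_contour_integral (c * \<Psi> w)) C"
    proof (rule has_contour_integral_eq)
      fix t assume "t \<in> path_image C"
      then have "Gd (t,y0) (cscale c (0,w)) = c * Gd (t,y0) (0,w)" using Gdl Ston by blast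
      then show "c * (Gd (t,y0) (0,w) / (t-x0)^2) = Gd (t,y0) (0, \<chi> i. c * w $ i) / (t-x0)^2"
        by (simp add: cscale_0_v)
    qed
    then show ?thesis using has\<Psi> has_contour_integral_unique by blast
  qed
  have \<Psi>_bd: "norm (\<Psi> w) \<le> norm w * ((M+1)/\<delta>^2 * pi)" for w
  proof -
    have "norm (\<Psi> w) \<le> ((M+1)/\<delta> * norm w / (4*\<delta>^2)) * (2*pi*(2*\<delta>))"
    proof (rule has_contour_integral_bound_circlepath[OF has\<Psi>[unfolded C_def]])
      show "0 \<le> (M+1)/\<delta> * norm w / (4*\<delta>^2)" using M0 \<delta> by simp
      show "0 < 2*\<delta>" using \<delta> by simp
      fix t assume t: "cmod (t - x0) = 2*\<delta>"
      have "cmod (Gd (t,y0) (0,w)) \<le> (M+1)/\<delta> * norm w" by (rule E1) (use t in simp)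
      then show "cmod (Gd (t,y0) (0,w) / (t-x0)^2) \<le> (M+1)/\<delta> * norm w / (4*\<delta>^2)"
      proof -
        have "cmod ((t-x0)^2) = 4*\<delta>^2" using t by (simp add: norm_power power_mult_distrib)
        moreover have "cmod (Gd (t,y0) (0,w)) / (4*\<delta>^2) \<le> (M+1)/\<delta> * norm w / (4*\<delta>^2)"
          using \<open>cmod (Gd (t,y0) (0,w)) \<le> (M+1)/\<delta> * norm w\<close> \<delta> by (intro divide_right_mono) auto
        ultimately show ?thesis by (simp add: norm_divide)
      qed
    qed
    also have "\<dots> = norm w * ((M+1)/\<delta>^2 * pi)" using \<delta> by (simp add: field_simps power2_eq_square power3_eq_cube)
    finally show ?thesis .
  qed
  have \<Psi>_scale: "\<Psi> (r *\<^sub>R w) = r *\<^sub>R \<Psi> w" for r w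
  proof -
    have "(\<chi> i. of_real r * w $ i) = r *\<^sub>R w" by (simp add: vec_eq_iff vector_scaleR_component scaleR_conv_of_real[where 'a=complex])
    then show ?thesis using \<Psi>_cmul[of "of_real r" w] by (simp add: scaleR_conv_of_real)
  qed
  have bl\<Psi>: "bounded_linear \<Psi>"
    by (rule bounded_linear_intro[OF \<Psi>_add \<Psi>_scale \<Psi>_bd])
  define h where "h x = partial_x G (x, y0)" for x
  have h_eq: "h = deriv (\<lambda>s. G (s, y0))" by (simp add: h_def partial_x_def fun_eq_iff)
  have hhol: "h holomorphic_on ball x0 (3*\<delta>)"
    unfolding h_eq by (rule holomorphic_deriv[OF slice_hol]) (use \<delta> in auto)
  define c where "c = deriv h x0"
  have hder: "(h has_field_derivative c) (at x0)"
    unfolding c_def by (rule holomorphic_derivI[OF hhol]) (use \<delta> in auto)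
  have f1: "((\<lambda>P. h (fst P)) has_derivative (\<lambda>k. c * fst k)) (at P0)"
  proof -
    have hd': "(h has_derivative (*) c) (at (fst P0))" using hder by (simp add: P0 has_field_derivative_def)
    have "((\<lambda>P. h (fst P)) has_derivative (\<lambda>k. c * fst k)) (at P0)"
      using has_derivative_compose[OF has_derivative_fst[OF has_derivative_ident] hd'] by simp
    then show ?thesis .
  qed
  define f2 where "f2 P = partial_x G P - h (fst P)" for P
  define \<Lambda>2 where "\<Lambda>2 k = \<Psi> (snd k) / (2*pi*\<i>)" for k :: "complex \<times> (complex^'n)"
  have bl2: "bounded_linear \<Lambda>2"
  proof -
    have "bounded_linear (\<lambda>k::complex \<times> (complex^'n). \<Psi> (snd k))"
      using bounded_linear_compose[OF bl\<Psi> bounded_linear_snd] by (simp add: o_def)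
    then show ?thesis unfolding \<Lambda>2_def
      using bounded_linear_compose[OF bounded_linear_divide] by (simp add: o_def)
  qed
  define K2 where "K2 = 4*(M+1)/\<delta>^4"
  have main: "norm (f2 (P0 + k) - f2 P0 - \<Lambda>2 k) \<le> 2*\<delta>*K2 * (norm k)^2" if k: "norm k < \<delta>/2" for k
  proof -
    obtain u w where kk: "k = (u, w)" by fastforce
    have u: "cmod u \<le> norm k" and w: "norm w \<le> norm k" unfolding kk by (rule norm_fst_le, rule norm_snd_le)
    have f2P0: "f2 P0 = 0" by (simp add: f2_def h_def P0)
    have c1: "((\<lambda>t. G (t,y0+w) / (t - (x0+u))^2) has_contour_integral (2*pi*\<i>) * partial_x G (x0+u,y0+w)) C"
      by (rule cauchy) (use u w k \<delta> in auto)
    have c0: "((\<lambda>t. G (t,y0) / (t - (x0+u))^2) has_contour_integral (2*pi*\<i>) * partial_x G (x0+u,y0)) C"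
      by (rule cauchy) (use u k \<delta> in auto)
    have hc: "((\<lambda>t. G (t,y0+w) / (t - (x0+u))^2 - G (t,y0) / (t - (x0+u))^2 - Gd (t,y0) (0,w) / (t-x0)^2)
          has_contour_integral ((2*pi*\<i>) * partial_x G (x0+u,y0+w) - (2*pi*\<i>) * partial_x G (x0+u,y0) - \<Psi> w)) C"
      by (intro has_contour_integral_diff c1 c0 has\<Psi>)
    have bnd: "norm ((2*pi*\<i>) * partial_x G (x0+u,y0+w) - (2*pi*\<i>) * partial_x G (x0+u,y0) - \<Psi> w)
         \<le> (K2 * (norm k)^2) * (2*pi*(2*\<delta>))"
    proof (rule has_contour_integral_bound_circlepath[OF hc[unfolded C_def]])
      show "0 \<le> K2 * (norm k)^2" using M0 \<delta> by (simp add: K2_def)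
      show "0 < 2*\<delta>" using \<delta> by simp
      fix t assume t: "cmod (t - x0) = 2*\<delta>"
      have uu: "cmod u \<le> \<delta>/2" "norm w \<le> \<delta>/2" using u w k by auto
      have kb1: "cmod (1/((t-x0)-u)^2) \<le> 1/\<delta>^2" and kb2: "cmod (1/((t-x0)-u)^2 - 1/(t-x0)^2) \<le> 2*cmod u/\<delta>^3"
        using kernel_bound[OF t uu(1) \<delta>] by auto
      have tx: "t - (x0+u) = (t-x0) - u" by simp
      define E where "E = G (t,y0+w) - G (t,y0) - Gd (t,y0) (0,w)"
      define D where "D = Gd (t,y0) (0,w)"
      have Eb: "cmod E \<le> 2*(M+1)/\<delta>^2 * (norm w)^2" unfolding E_def by (rule E2) (use t uu in auto)
      have Db: "cmod D \<le> (M+1)/\<delta> * norm w" unfolding D_def by (rule E1) (use t in auto)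
      have split: "G (t,y0+w) / (t - (x0+u))^2 - G (t,y0) / (t - (x0+u))^2 - Gd (t,y0) (0,w) / (t-x0)^2
          = E * (1/((t-x0)-u)^2) + D * (1/((t-x0)-u)^2 - 1/(t-x0)^2)"
        unfolding tx E_def D_def Q_split by simp
      have "cmod (E * (1/((t-x0)-u)^2) + D * (1/((t-x0)-u)^2 - 1/(t-x0)^2))
          \<le> cmod E * cmod (1/((t-x0)-u)^2) + cmod D * cmod (1/((t-x0)-u)^2 - 1/(t-x0)^2)"
        by (metis norm_mult norm_triangle_ineq)
      also have "\<dots> \<le> (2*(M+1)/\<delta>^2 * (norm w)^2) * (1/\<delta>^2) + ((M+1)/\<delta> * norm w) * (2*cmod u/\<delta>^3)"
        using Eb Db kb1 kb2 M0 \<delta> by (intro add_mono mult_mono) auto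
      also have "\<dots> \<le> (2*(M+1)/\<delta>^2 * (norm k)^2) * (1/\<delta>^2) + ((M+1)/\<delta> * norm k) * (2*norm k/\<delta>^3)"
        using u w M0 \<delta> by (intro add_mono mult_mono divide_right_mono power_mono mult_left_mono) auto
      also have "\<dots> = K2 * (norm k)^2"
        using \<delta> by (simp add: K2_def field_simps eval_nat_numeral)
      finally show "cmod (G (t,y0+w) / (t - (x0+u))^2 - G (t,y0) / (t - (x0+u))^2 - Gd (t,y0) (0,w) / (t-x0)^2)
          \<le> K2 * (norm k)^2" unfolding split .
    qed
    have eq: "f2 (P0 + k) - f2 P0 - \<Lambda>2 k
        = ((2*pi*\<i>) * partial_x G (x0+u,y0+w) - (2*pi*\<i>) * partial_x G (x0+u,y0) - \<Psi> w) / (2*pi*\<i>)"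
      by (simp add: f2P0 f2_def h_def \<Lambda>2_def P0 kk field_simps)
    have n: "cmod (2*pi*\<i>) = 2*pi" by (simp add: norm_mult)
    have "norm (f2 (P0 + k) - f2 P0 - \<Lambda>2 k) \<le> (K2 * (norm k)^2) * (2*pi*(2*\<delta>)) / (2*pi)"
      unfolding eq norm_divide n by (rule divide_right_mono[OF bnd]) simp
    also have "\<dots> = 2*\<delta>*K2 * (norm k)^2" by simp
    finally show ?thesis .
  qed
  have f2d: "(f2 has_derivative \<Lambda>2) (at P0)"
    unfolding has_derivative_at
  proof (intro conjI bl2)
    show "(\<lambda>k. norm (f2 (P0 + k) - f2 P0 - \<Lambda>2 k) / norm k) \<midarrow>0\<rightarrow> 0"
    proof (rule Lim_null_comparison)
      show "\<forall>\<^sub>F k in at 0. norm (norm (f2 (P0 + k) - f2 P0 - \<Lambda>2 k) / norm k) \<le> 2*\<delta>*K2 * norm k"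
        unfolding eventually_at
      proof (intro exI[of _ "\<delta>/2"] conjI allI impI ballI)
        show "0 < \<delta>/2" using \<delta> by simp
        fix k :: "complex \<times> (complex^'n)" assume "k \<noteq> 0 \<and> dist k 0 < \<delta>/2"
        then have k0: "norm k > 0" and kl: "norm k < \<delta>/2" by auto
        have "norm (f2 (P0 + k) - f2 P0 - \<Lambda>2 k) / norm k \<le> 2*\<delta>*K2 * (norm k)^2 / norm k"
          using main[OF kl] k0 by (intro divide_right_mono) auto
        also have "\<dots> = 2*\<delta>*K2 * norm k" using k0 by (simp add: power2_eq_square)
        finally show "norm (norm (f2 (P0 + k) - f2 P0 - \<Lambda>2 k) / norm k) \<le> 2*\<delta>*K2 * norm k" by simp
      qed
      show "((\<lambda>k. 2*\<delta>*K2 * norm k) \<longlongrightarrow> 0) (at 0)"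
        by (intro tendsto_eq_intros) auto
    qed
  qed
  have sum: "partial_x G = (\<lambda>P. h (fst P) + f2 P)" by (simp add: f2_def fun_eq_iff)
  have der: "(partial_x G has_derivative (\<lambda>k. c * fst k + \<Lambda>2 k)) (at P0)"
    unfolding sum by (rule has_derivative_add[OF f1 f2d])
  moreover have "\<forall>a v. c * fst (cscale a v) + \<Lambda>2 (cscale a v) = a * (c * fst v + \<Lambda>2 v)"
    by (simp add: cscale_def \<Lambda>2_def \<Psi>_cmul algebra_simps)
  ultimately show "\<exists>L. (partial_x G has_derivative L) (at P0) \<and> (\<forall>c v. L (cscale c v) = c * L v)"
    by blast
qed


lemma cholo_const: "open S \<Longrightarrow> cholo_on S (\<lambda>_. c)"
  unfolding cholo_on_def by (auto intro!: exI[of _ "\<lambda>_. 0"] derivative_eq_intros)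

lemma cholo_add:
  assumes "cholo_on S A" "cholo_on S B" shows "cholo_on S (\<lambda>P. A P + B P)"
  unfolding cholo_on_def
proof (intro conjI ballI)
  show "open S" using assms cholo_open by blast
  fix P assume P: "P \<in> S"
  obtain LA where A: "(A has_derivative LA) (at P)" "\<forall>c v. LA (cscale c v) = c * LA v" using cholo_onD[OF assms(1) P] by blast
  obtain LB where B: "(B has_derivative LB) (at P)" "\<forall>c v. LB (cscale c v) = c * LB v" using cholo_onD[OF assms(2) P] by blast
  show "\<exists>L. ((\<lambda>P. A P + B P) has_derivative L) (at P) \<and> (\<forall>c v. L (cscale c v) = c * L v)"
    using has_derivative_add[OF A(1) B(1)] A(2) B(2) by (intro exI[of _ "\<lambda>k. LA k + LB k"]) (auto simp: algebra_simps)
qed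

lemma cholo_mult:
  assumes "cholo_on S A" "cholo_on S B" shows "cholo_on S (\<lambda>P. A P * B P)"
  unfolding cholo_on_def
proof (intro conjI ballI)
  show "open S" using assms cholo_open by blast
  fix P assume P: "P \<in> S"
  obtain LA where A: "(A has_derivative LA) (at P)" "\<forall>c v. LA (cscale c v) = c * LA v" using cholo_onD[OF assms(1) P] by blast
  obtain LB where B: "(B has_derivative LB) (at P)" "\<forall>c v. LB (cscale c v) = c * LB v" using cholo_onD[OF assms(2) P] by blast
  show "\<exists>L. ((\<lambda>P. A P * B P) has_derivative L) (at P) \<and> (\<forall>c v. L (cscale c v) = c * L v)"
    using has_derivative_mult[OF A(1) B(1)] A(2) B(2)
    by (intro exI[of _ "\<lambda>k. A P * LB k + LA k * B P"]) (auto simp: algebra_simps)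
qed

lemma cholo_compose:
  assumes "cholo_on S A" "f holomorphic_on T" "open T" "\<And>P. P \<in> S \<Longrightarrow> A P \<in> T"
  shows "cholo_on S (\<lambda>P. f (A P))"
  unfolding cholo_on_def
proof (intro conjI ballI)
  show "open S" using assms cholo_open by blast
  fix P assume P: "P \<in> S"
  obtain LA where A: "(A has_derivative LA) (at P)" "\<forall>c v. LA (cscale c v) = c * LA v" using cholo_onD[OF assms(1) P] by blast
  have fd: "(f has_field_derivative deriv f (A P)) (at (A P))"
    using holomorphic_derivI[OF assms(2,3) assms(4)[OF P]] by simp
  show "\<exists>L. ((\<lambda>P. f (A P)) has_derivative L) (at P) \<and> (\<forall>c v. L (cscale c v) = c * L v)"
    using has_derivative_compose[OF A(1) fd[unfolded has_field_derivative_def]] A(2)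
    by (intro exI[of _ "\<lambda>k. deriv f (A P) * LA k"]) (auto simp: algebra_simps)
qed

lemma cholo_cmult: "cholo_on S A \<Longrightarrow> cholo_on S (\<lambda>P. c * A P)"
  using cholo_mult[OF cholo_const] cholo_open by blast

lemma cholo_uminus: "cholo_on S A \<Longrightarrow> cholo_on S (\<lambda>P. - A P)"
  using cholo_cmult[of S A "-1"] by simp

lemma cholo_diff: "cholo_on S A \<Longrightarrow> cholo_on S B \<Longrightarrow> cholo_on S (\<lambda>P. A P - B P)"
  using cholo_add[of S A "\<lambda>P. - B P"] cholo_uminus by fastforce

lemma cholo_power: "cholo_on S A \<Longrightarrow> cholo_on S (\<lambda>P. A P ^ n)"
  by (induction n) (auto intro: cholo_mult cholo_const cholo_open)

lemma cholo_sum: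
  assumes "finite I" "open S" "\<And>i. i \<in> I \<Longrightarrow> cholo_on S (\<lambda>P. f i P)"
  shows "cholo_on S (\<lambda>P. \<Sum>i\<in>I. f i P)"
  using assms by (induction I rule: finite_induct) (auto intro: cholo_add cholo_const)

lemma cholo_subset: "cholo_on S A \<Longrightarrow> open T \<Longrightarrow> T \<subseteq> S \<Longrightarrow> cholo_on T A"
  unfolding cholo_on_def by blast

lemma partial_x_iter:
  "(partial_x ^^ k) G P = (deriv ^^ k) (\<lambda>t. G (t, snd P)) (fst P)"
proof (induction k arbitrary: P)
  case 0
  then show ?case by simp
next
  case (Suc k)
  have "(partial_x ^^ Suc k) G P = partial_x ((partial_x ^^ k) G) P" by simp
  also have "\<dots> = deriv (\<lambda>t. (partial_x ^^ k) G (t, snd P)) (fst P)" by (simp add: partial_x_def)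
  also have "\<dots> = deriv (\<lambda>t. (deriv ^^ k) (\<lambda>s. G (s, snd P)) t) (fst P)" using Suc by simp
  also have "\<dots> = (deriv ^^ Suc k) (\<lambda>t. G (t, snd P)) (fst P)" by (simp add: eta_contract_eq)
  finally show ?case .
qed

lemma cholo_partial_iter: "cholo_on S G \<Longrightarrow> cholo_on S ((partial_x ^^ k) G)"
  by (induction k) (auto intro: partial_x_cholo)

lemma cholo_Dk:
  assumes "cholo_on S G"
  shows "cholo_on S (\<lambda>P. (deriv ^^ k) (\<lambda>t. G (t, snd P)) (fst P))"
  using cholo_partial_iter[OF assms, of k] by (simp add: partial_x_iter[abs_def])

fun Wp :: "(nat \<Rightarrow> complex) \<Rightarrow> nat \<Rightarrow> complex" where
  "Wp c 0 = 1"
| "Wp c (Suc n) = - (\<Sum>i\<in>{1..Suc n}. c i * c 0 ^ (i - 1) * Wp c (Suc n - i))"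

lemma Wp_inverse:
  assumes "c 0 \<noteq> 0"
  shows "fps_nth (inverse (Abs_fps c)) n = Wp c n / c 0 ^ Suc n"
proof (induction n rule: less_induct)
  case (less n)
  show ?case
  proof (cases n)
    case 0
    then show ?thesis using assms by (simp add: fps_inverse_def inverse_eq_divide)
  next
    case (Suc m)
    have "fps_nth (inverse (Abs_fps c)) (Suc m) = - inverse (c 0) * (\<Sum>i\<in>{1..Suc m}. c i * fps_nth (inverse (Abs_fps c)) (Suc m - i))"
      using assms by (simp add: fps_inverse_def)
    also have "\<dots> = - inverse (c 0) * (\<Sum>i\<in>{1..Suc m}. c i * (Wp c (Suc m - i) / c 0 ^ Suc (Suc m - i)))"
      using less Suc by (intro arg_cong2[where f="(*)"] refl sum.cong) auto
    also have "\<dots> = - (\<Sum>i\<in>{1..Suc m}. c i * c 0 ^ (i - 1) * Wp c (Suc m - i)) / c 0 ^ Suc (Suc m)"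
    proof -
      have "inverse (c 0) * (c i * (Wp c (Suc m - i) / c 0 ^ Suc (Suc m - i))) =
            c i * c 0 ^ (i - 1) * Wp c (Suc m - i) / c 0 ^ Suc (Suc m)" if "i \<in> {1..Suc m}" for i
      proof -
        have e: "c 0 ^ Suc (Suc m) = c 0 ^ (i - 1) * (c 0 * c 0 ^ Suc (Suc m - i))"
        proof -
          have "Suc (Suc m) = (i - 1) + Suc (Suc (Suc m - i))" using that by auto
          then show ?thesis by (metis power_add power_Suc)
        qed
        show ?thesis using assms unfolding e by (simp add: field_simps)
      qed
      then have "(\<Sum>i\<in>{1..Suc m}. inverse (c 0) * (c i * (Wp c (Suc m - i) / c 0 ^ Suc (Suc m - i))))
          = (\<Sum>i\<in>{1..Suc m}. c i * c 0 ^ (i - 1) * Wp c (Suc m - i) / c 0 ^ Suc (Suc m))"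
        by (rule sum.cong[OF refl])
      then show ?thesis by (metis (no_types) mult_minus_left sum_distrib_left sum_divide_distrib minus_divide_left)
    qed
    finally show ?thesis using Suc by simp
  qed
qed

lemma cholo_Wp:
  assumes "open S" "\<And>i. cholo_on S (\<lambda>P. c P i)"
  shows "cholo_on S (\<lambda>P. Wp (c P) n)"
proof (induction n rule: less_induct)
  case (less n)
  show ?case
  proof (cases n)
    case 0
    then show ?thesis using assms by (simp add: cholo_const)
  next
    case (Suc m)
    have "cholo_on S (\<lambda>P. \<Sum>i\<in>{1..Suc m}. c P i * c P 0 ^ (i - 1) * Wp (c P) (Suc m - i))"
      using less Suc assms by (intro cholo_sum cholo_mult cholo_power) auto
    then have "cholo_on S (\<lambda>P. - (\<Sum>i\<in>{1..Suc m}. c P i * c P 0 ^ (i - 1) * Wp (c P) (Suc m - i)))"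
      by (rule cholo_uminus)
    then show ?thesis using Suc by (simp only: Wp.simps)
  qed
qed



definition ordge :: "complex fps \<Rightarrow> nat \<Rightarrow> bool" where
  "ordge p m \<longleftrightarrow> (\<forall>j<m. p $ j = 0)"

lemma ordge_mult:
  fixes p q :: "complex fps"
  assumes "ordge p a" "ordge q b" shows "ordge (p * q) (a + b)"
  unfolding ordge_def
proof (intro allI impI)
  fix n assume n: "n < a + b"
  have "\<forall>i\<in>{0..n}. p $ i * q $ (n - i) = 0"
  proof
    fix i assume "i \<in> {0..n}"
    then have "i < a \<or> n - i < b" using n by auto
    then show "p $ i * q $ (n - i) = 0" using assms by (auto simp: ordge_def)
  qed
  then show "(p * q) $ n = 0" by (simp add: fps_mult_nth sum.neutral)
qed

lemma mult_nth_exact: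
  fixes p q :: "complex fps"
  assumes "ordge p a" "ordge q b" shows "(p * q) $ (a + b) = p $ a * q $ b"
proof -
  have "(p * q) $ (a + b) = (\<Sum>i\<in>{0..a+b}. p $ i * q $ (a + b - i))" by (simp add: fps_mult_nth)
  also have "\<dots> = (\<Sum>i\<in>{a}. p $ i * q $ (a + b - i))"
  proof (rule sum.mono_neutral_right)
    show "\<forall>i\<in>{0..a + b} - {a}. p $ i * q $ (a + b - i) = 0"
    proof
      fix i assume "i \<in> {0..a + b} - {a}"
      then have "i < a \<or> a + b - i < b" by auto
      then show "p $ i * q $ (a + b - i) = 0" using assms by (auto simp: ordge_def)
    qed
  qed auto
  finally show ?thesis by simp
qed

lemma ordge_deriv: "ordge p (Suc a) \<Longrightarrow> ordge (fps_deriv p) a"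
  by (auto simp: ordge_def fps_deriv_nth)

lemma ordge_mono: "ordge p a \<Longrightarrow> b \<le> a \<Longrightarrow> ordge p b"
  by (auto simp: ordge_def)

lemma iter_ordge:
  fixes L :: "complex fps"
  assumes L: "ordge L \<mu>" "\<mu> \<ge> 1" and k: "k \<ge> 1"
  shows "ordge (((\<lambda>p. L * fps_deriv p) ^^ k) fps_X) (k*(\<mu>-1)+1)"
  using k
proof (induction k rule: dec_induct)
  case base
  then show ?case using L by simp
next
  case (step k)
  have d: "ordge (fps_deriv (((\<lambda>p. L * fps_deriv p) ^^ k) fps_X)) (k*(\<mu>-1))"
    using ordge_deriv step.IH by simp
  have "ordge (L * fps_deriv (((\<lambda>p. L * fps_deriv p) ^^ k) fps_X)) (\<mu> + k*(\<mu>-1))"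
    by (rule ordge_mult[OF L(1) d])
  moreover have "\<mu> + k*(\<mu>-1) = Suc k * (\<mu>-1) + 1"
  proof -
    obtain r where "\<mu> = Suc r" using L(2) by (cases \<mu>) auto
    then show ?thesis by simp
  qed
  ultimately show ?case by simp
qed

lemma flow1_coeff:
  fixes L :: "complex fps"
  assumes L: "ordge L \<mu>" "\<mu> \<ge> 2" and m: "2 \<le> m" "m \<le> 2*\<mu>-1"
  shows "fps_nth (flow1 L) m = L $ m + (if m = 2*\<mu>-1 then of_nat \<mu> * (L $ \<mu>)^2 / 2 else 0)"
proof -
  define f where "f k = fps_nth (((\<lambda>p. L * fps_deriv p) ^^ k) fps_X) m / fact k" for k
  have "fps_nth (flow1 L) m = (\<Sum>k\<le>m. f k)" by (simp add: flow1_def f_def)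
  also have "\<dots> = (\<Sum>k\<in>{0,1,2}. f k)"
  proof (rule sum.mono_neutral_right)
    show "{0,1,2} \<subseteq> {..m}" using m by auto
    show "\<forall>k\<in>{..m} - {0, 1, 2}. f k = 0"
    proof
      fix k assume "k \<in> {..m} - {0, 1, 2}"
      then have k: "k \<ge> 3" by auto
      have o: "ordge (((\<lambda>p. L * fps_deriv p) ^^ k) fps_X) (k*(\<mu>-1)+1)"
        using iter_ordge[OF L(1)] L(2) k by auto
      have "k*(\<mu>-1)+1 \<ge> 3*(\<mu>-1)+1" using k by (intro add_mono mult_right_mono) auto
      moreover have "3*(\<mu>-1)+1 > m" using m L(2) by auto
      ultimately have "m < k*(\<mu>-1)+1" by linarith
      then show "f k = 0" using o unfolding ordge_def f_def by simp
    qed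
  qed auto
  also have "\<dots> = f 0 + f 1 + f 2" by simp
  also have "f 0 = 0" using m by (simp add: f_def)
  also have "f 1 = L $ m" by (simp add: f_def)
  also have "f 2 = (L * fps_deriv L) $ m / 2" by (simp add: f_def numeral_2_eq_2)
  also have "(L * fps_deriv L) $ m = (if m = 2*\<mu>-1 then of_nat \<mu> * (L $ \<mu>)^2 else 0)"
  proof -
    have dL: "ordge (fps_deriv L) (\<mu>-1)" using ordge_deriv[of L "\<mu>-1"] L by simp
    have o: "ordge (L * fps_deriv L) (\<mu> + (\<mu>-1))" by (rule ordge_mult[OF L(1) dL])
    show ?thesis
    proof (cases "m = 2*\<mu>-1")
      case True
      have "(L * fps_deriv L) $ (\<mu> + (\<mu>-1)) = L $ \<mu> * (fps_deriv L) $ (\<mu>-1)"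
        by (rule mult_nth_exact[OF L(1) dL])
      also have "\<dots> = of_nat \<mu> * (L $ \<mu>)^2" using L(2) by (simp add: fps_deriv_nth power2_eq_square)
      finally show ?thesis using True L(2) by (simp add: mult_2)
    next
      case False
      then have "m < \<mu> + (\<mu>-1)" using m by auto
      then show ?thesis using o False by (simp add: ordge_def)
    qed
  qed
  finally show ?thesis by auto
qed



lemma flow1_main:
  fixes L T :: "complex fps"
  assumes L0: "L $ 0 = 0" and L1: "L $ 1 = 0" and T: "flow1 L = T" and \<nu>: "\<nu> \<ge> 2"
    and Tz: "\<And>j. 2 \<le> j \<Longrightarrow> j < \<nu> \<Longrightarrow> T $ j = 0" and T\<nu>: "T $ \<nu> \<noteq> 0"
  shows "ordge L \<nu>"
    and "\<And>i. i < \<nu> \<Longrightarrow> L $ (\<nu>+i) = (if i = \<nu>-1 then T $ (2*\<nu>-1) - of_nat \<nu> * (T $ \<nu>)^2/2 else T $ (\<nu>+i))"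
proof -
  have Lnz: "L \<noteq> 0"
  proof
    assume "L = 0"
    moreover have "\<nu> \<noteq> 2*\<nu>-1" using \<nu> by simp
    ultimately have "T $ \<nu> = 0"
      using flow1_coeff[of "0::complex fps" \<nu> \<nu>] T \<nu> by (simp add: ordge_def)
    then show False using T\<nu> by simp
  qed
  define \<mu> where "\<mu> = subdegree L"
  have L\<mu>: "L $ \<mu> \<noteq> 0" using Lnz by (simp add: \<mu>_def)
  have oL: "ordge L \<mu>" unfolding ordge_def \<mu>_def using nth_less_subdegree_zero by blast
  have \<mu>2: "\<mu> \<ge> 2"
  proof (rule ccontr)
    assume "\<not> \<mu> \<ge> 2"
    then have "\<mu> = 0 \<or> \<mu> = 1" by auto
    then show False using L\<mu> L0 L1 by auto
  qed
  have eq: "\<mu> = \<nu>"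
  proof (rule ccontr)
    assume ne: "\<mu> \<noteq> \<nu>"
    show False
    proof (cases "\<mu> < \<nu>")
      case True
      have "T $ \<mu> = L $ \<mu> + (if \<mu> = 2*\<mu>-1 then of_nat \<mu> * (L $ \<mu>)^2 / 2 else 0)"
        using flow1_coeff[OF oL \<mu>2, of \<mu>] T \<mu>2 by simp
      then have "T $ \<mu> = L $ \<mu>" using \<mu>2 by simp
      then show False using Tz[of \<mu>] True \<mu>2 L\<mu> by simp
    next
      case False
      then have gt: "\<nu> < \<mu>" using ne by simp
      have "T $ \<nu> = L $ \<nu> + (if \<nu> = 2*\<mu>-1 then of_nat \<mu> * (L $ \<mu>)^2 / 2 else 0)"
        using flow1_coeff[OF oL \<mu>2, of \<nu>] T \<nu> gt by simp
      moreover have "L $ \<nu> = 0" using oL gt by (simp add: ordge_def)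
      ultimately have "T $ \<nu> = 0" using gt \<mu>2 by auto
      then show False using T\<nu> by simp
    qed
  qed
  show "ordge L \<nu>" using oL eq by simp
  have coef: "T $ m = L $ m + (if m = 2*\<nu>-1 then of_nat \<nu> * (L $ \<nu>)^2 / 2 else 0)"
    if "2 \<le> m" "m \<le> 2*\<nu>-1" for m
    using flow1_coeff[OF oL \<mu>2, of m] T that eq by simp
  have LT: "L $ \<nu> = T $ \<nu>" using coef[of \<nu>] \<nu> by simp
  fix i assume i: "i < \<nu>"
  have "T $ (\<nu>+i) = L $ (\<nu>+i) + (if \<nu>+i = 2*\<nu>-1 then of_nat \<nu> * (L $ \<nu>)^2 / 2 else 0)"
    using coef[of "\<nu>+i"] i \<nu> by simp
  moreover have "(\<nu>+i = 2*\<nu>-1) = (i = \<nu>-1)" using i \<nu> by auto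
  moreover have "\<nu>+(\<nu>-1) = 2*\<nu>-1" using \<nu> by simp
  ultimately show "L $ (\<nu>+i) = (if i = \<nu>-1 then T $ (2*\<nu>-1) - of_nat \<nu> * (T $ \<nu>)^2/2 else T $ (\<nu>+i))"
    using LT by (auto simp: algebra_simps)
qed



lemma fls_deriv_inverse_fls:
  fixes H :: "complex fls"
  assumes "H \<noteq> 0"
  shows "fls_deriv (inverse H) = - fls_deriv H * inverse H ^ 2"
proof -
  have "H * inverse H = 1" using assms by simp
  then have "fls_deriv (H * inverse H) = 0" by simp
  then have "H * fls_deriv (inverse H) + fls_deriv H * inverse H = 0" by simp
  then have "H * fls_deriv (inverse H) = - fls_deriv H * inverse H" by (simp add: eq_neg_iff_add_eq_0)
  then have "inverse H * (H * fls_deriv (inverse H)) = inverse H * (- fls_deriv H * inverse H)" by simp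
  moreover have "inverse H * (H * fls_deriv (inverse H)) = fls_deriv (inverse H)"
    using assms by (metis left_inverse mult.assoc mult_1)
  ultimately show ?thesis by (simp add: power2_eq_square algebra_simps)
qed

lemma res_deriv_inv_pow:
  fixes H :: "complex fls"
  assumes "H \<noteq> 0" "fls_subdegree H = 1" "j \<ge> 1"
  shows "fls_residue (fls_deriv H * inverse H ^ j) = (if j = 1 then 1 else 0)"
proof (cases "j = 1")
  case True
  then show ?thesis using fls_residue_deriv_times_inverse_eq_subdegree(1)[of H] assms by simp
next
  case False
  then obtain k where k: "j = Suc (Suc k)" using assms(3) by (metis Suc_le_D Suc_le_mono le_SucE One_nat_def)
  have "fls_deriv (inverse H ^ Suc k) = of_nat (Suc k) * inverse H ^ k * fls_deriv (inverse H)"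
    by (subst fls_deriv_power) simp
  also have "\<dots> = - of_nat (Suc k) * (fls_deriv H * inverse H ^ j)"
    using assms(1) k by (simp add: fls_deriv_inverse_fls power2_eq_square algebra_simps)
  finally have e: "fls_deriv (inverse H ^ Suc k) = of_int (- int (Suc k)) * (fls_deriv H * inverse H ^ j)"
    by simp
  have "0 = fls_residue (of_int (- int (Suc k)) * (fls_deriv H * inverse H ^ j))"
    using fls_residue_deriv[of "inverse H ^ Suc k"] unfolding e by simp
  also have "\<dots> = of_int (- int (Suc k)) * fls_residue (fls_deriv H * inverse H ^ j)"
    by (rule fls_residue_of_int_times(1))
  moreover have "complex_of_nat k \<noteq> -1"
  proof
    assume "complex_of_nat k = -1"
    then have "Re (complex_of_nat k) = -1" by simp
    then show False by simp
  qed
  ultimately have "fls_residue (fls_deriv H * inverse H ^ j) = 0" by auto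
  then show ?thesis using False by simp
qed



lemma fps_to_fls_sum: "fps_to_fls (\<Sum>i\<in>A. f i) = (\<Sum>i\<in>A. fps_to_fls (f i))"
  by (induction A rule: infinite_finite_induct) auto

lemma res_formula:
  fixes L h F :: "complex fps"
  assumes L0: "L $ 0 = 0" and Lnz: "L \<noteq> 0" and h0: "h $ 0 = 0" and h1: "h $ 1 \<noteq> 0"
    and conj: "fps_compose L h = fps_deriv h * F"
  shows "fls_residue (inverse (fps_to_fls F)) = fps_nth (inverse (fps_shift (subdegree L) L)) (subdegree L - 1)"
proof -
  define \<nu> where "\<nu> = subdegree L"
  have \<nu>1: "\<nu> \<ge> 1"
  proof (rule ccontr)
    assume "\<not> \<nu> \<ge> 1"
    then have "\<nu> = 0" by simp
    then show False using nth_subdegree_nonzero[OF Lnz] L0 by (simp add: \<nu>_def)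
  qed
  define V where "V = fps_shift \<nu> L"
  have V0: "V $ 0 \<noteq> 0" using nth_subdegree_nonzero[OF Lnz] by (simp add: V_def \<nu>_def)
  have LV: "L = V * fps_X ^ \<nu>" using fps_shift_times_fps_X_power[of \<nu> L] by (simp add: V_def \<nu>_def)
  define U where "U = inverse V"
  have UV: "U * V = 1" unfolding U_def by (rule inverse_mult_eq_1[OF V0])
  define P where "P = fps_shift \<nu> U"
  have Udec: "U = (\<Sum>i<\<nu>. fps_const (U $ i) * fps_X ^ i) + P * fps_X ^ \<nu>"
  proof (rule fps_ext)
    fix n
    have "(\<Sum>i<\<nu>. fps_const (U $ i) * fps_X ^ i) $ n = (\<Sum>i<\<nu>. (fps_const (U $ i) * fps_X ^ i) $ n)"
      by (rule fps_sum_nth)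
    also have "\<dots> = (\<Sum>i\<in>{..<\<nu>}. (if i = n then U $ i else 0))" by (rule sum.cong) auto
    also have "\<dots> = (if n < \<nu> then U $ n else 0)"
      by (subst sum.delta[OF finite_lessThan]) simp
    finally have a: "(\<Sum>i<\<nu>. fps_const (U $ i) * fps_X ^ i) $ n = (if n < \<nu> then U $ n else 0)" .
    have b: "(P * fps_X ^ \<nu>) $ n = (if \<nu> \<le> n then U $ n else 0)"
      by (simp add: fps_X_power_mult_right_nth P_def)
    show "U $ n = ((\<Sum>i<\<nu>. fps_const (U $ i) * fps_X ^ i) + P * fps_X ^ \<nu>) $ n"
      using a b by simp
  qed
  have Xh: "fps_X oo h = h" using h0 by simp
  have Lh: "fps_compose L h = fps_compose V h * h ^ \<nu>"
  proof -
    have "fps_compose L h = (V oo h) * (fps_X ^ \<nu> oo h)"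
      by (subst LV) (rule fps_compose_mult_distrib[OF h0])
    also have "fps_X ^ \<nu> oo h = h ^ \<nu>"
      using fps_compose_power[OF h0, of fps_X \<nu>] Xh by simp
    finally show ?thesis .
  qed
  have UVh: "(U oo h) * (V oo h) = 1"
    using fps_compose_mult_distrib[OF h0, of U V] UV by simp
  have Uh: "(U oo h) = (\<Sum>i<\<nu>. fps_const (U $ i) * h ^ i) + (P oo h) * h ^ \<nu>"
  proof -
    have "(U oo h) = (\<Sum>i<\<nu>. fps_const (U $ i) * fps_X ^ i oo h) + (P * fps_X ^ \<nu> oo h)"
      by (subst Udec) (simp add: fps_compose_add_distrib fps_compose_sum_distrib)
    also have "\<dots> = (\<Sum>i<\<nu>. fps_const (U $ i) * h ^ i) + (P oo h) * h ^ \<nu>"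
      using fps_compose_mult_distrib[OF h0] fps_compose_power[OF h0] Xh
      by (simp add: fps_compose_mult_distrib[OF h0] flip: fps_compose_power[OF h0])
    finally show ?thesis .
  qed
  define H where "H = fps_to_fls h"
  define D where "D = fps_to_fls (fps_deriv h)"
  have DH: "D = fls_deriv H" by (simp add: D_def H_def fls_deriv_fps_to_fls)
  have hnz: "h \<noteq> 0" using h1 by (metis fps_zero_nth)
  have Hnz: "H \<noteq> 0" using hnz by (simp add: H_def)
  have subh: "subdegree h = 1" by (rule subdegreeI) (use h0 h1 in auto)
  have Hsub: "fls_subdegree H = 1" by (simp add: H_def fls_subdegree_fls_to_fps subh)
  have Dnz: "D \<noteq> 0"
  proof -
    have "fps_deriv h $ 0 \<noteq> 0" using h1 by simp
    then have "fps_deriv h \<noteq> 0" by (metis fps_zero_nth)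
    then show ?thesis by (simp add: D_def)
  qed
  define Vh where "Vh = fps_to_fls (V oo h)"
  define Uh' where "Uh' = fps_to_fls (U oo h)"
  define Ph where "Ph = fps_to_fls (P oo h)"
  have e1: "Vh * H ^ \<nu> = D * fps_to_fls F"
  proof -
    have "fps_to_fls (fps_compose L h) = fps_to_fls (fps_deriv h * F)" using conj by simp
    then show ?thesis unfolding Lh fls_times_fps_to_fls fps_to_fls_power Vh_def H_def D_def .
  qed
  have e2: "Vh * Uh' = 1"
    using arg_cong[OF UVh, of fps_to_fls] unfolding fls_times_fps_to_fls Vh_def Uh'_def
    by (simp add: mult.commute)
  have e3: "Uh' = (\<Sum>i<\<nu>. fls_const (U $ i) * H ^ i) + Ph * H ^ \<nu>"
    unfolding Uh'_def Uh fps_to_fls_plus fps_to_fls_sum fls_times_fps_to_fls fps_to_fls_power Ph_def H_def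
    by simp
  have invF: "inverse (fps_to_fls F) = D * Uh' * inverse H ^ \<nu>"
  proof -
    have F: "fps_to_fls F = Vh * H ^ \<nu> / D" using e1 Dnz by (simp add: field_simps)
    have iV: "inverse Vh = Uh'" by (rule inverse_unique[OF e2])
    show ?thesis unfolding F inverse_divide divide_inverse inverse_mult_distrib iV power_inverse
      by (simp add: mult.assoc)
  qed
  have pw: "H ^ i * inverse H ^ \<nu> = inverse H ^ (\<nu> - i)" if "i < \<nu>" for i
  proof -
    have "inverse H ^ \<nu> = inverse H ^ i * inverse H ^ (\<nu> - i)"
      using that by (simp flip: power_add)
    moreover have "H ^ i * inverse H ^ i = 1" using Hnz by (simp add: power_inverse[symmetric] field_simps)
    ultimately show ?thesis by (metis mult.assoc mult_1)
  qed
  have pw2: "H ^ \<nu> * inverse H ^ \<nu> = 1" using Hnz by (simp add: power_inverse[symmetric] field_simps)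
  have expand: "inverse (fps_to_fls F) = (\<Sum>i<\<nu>. fls_const (U $ i) * (D * inverse H ^ (\<nu> - i))) + D * Ph"
  proof -
    have "inverse (fps_to_fls F) = D * ((\<Sum>i<\<nu>. fls_const (U $ i) * H ^ i) + Ph * H ^ \<nu>) * inverse H ^ \<nu>"
      using invF e3 by simp
    also have "\<dots> = (\<Sum>i<\<nu>. fls_const (U $ i) * (D * (H ^ i * inverse H ^ \<nu>))) + D * Ph * (H ^ \<nu> * inverse H ^ \<nu>)"
      by (simp add: algebra_simps sum_distrib_left sum_distrib_right)
    also have "\<dots> = (\<Sum>i<\<nu>. fls_const (U $ i) * (D * inverse H ^ (\<nu> - i))) + D * Ph"
      using pw pw2 by simp
    finally show ?thesis .
  qed
  have rPh: "fls_residue (D * Ph) = 0"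
    unfolding D_def Ph_def fls_times_fps_to_fls[symmetric] by simp
  have ri: "fls_residue (D * inverse H ^ (\<nu> - i)) = (if i = \<nu> - 1 then 1 else 0)" if "i < \<nu>" for i
  proof -
    have "fls_residue (D * inverse H ^ (\<nu> - i)) = (if \<nu> - i = 1 then 1 else 0)"
      unfolding DH by (rule res_deriv_inv_pow[OF Hnz Hsub]) (use that in auto)
    moreover have "(\<nu> - i = 1) = (i = \<nu> - 1)" using that by auto
    ultimately show ?thesis by simp
  qed
  have "fls_residue (inverse (fps_to_fls F)) = (\<Sum>i<\<nu>. U $ i * fls_residue (D * inverse H ^ (\<nu> - i))) + fls_residue (D * Ph)"
    unfolding expand fls_residue_add by (simp add: fls_nth_sum del: fls_residue_def) (simp add: fls_nth_sum)
  also have "\<dots> = (\<Sum>i<\<nu>. U $ i * (if i = \<nu> - 1 then 1 else 0))"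
    using ri rPh by simp
  also have "\<dots> = U $ (\<nu> - 1)" using \<nu>1 by (simp add: sum.delta' if_distrib cong: if_cong)
  finally show ?thesis by (simp add: U_def V_def \<nu>_def)
qed



lemma res_analytic:
  fixes f :: "complex \<Rightarrow> complex"
  assumes hol: "f holomorphic_on ball z \<epsilon>" and \<epsilon>: "\<epsilon> > 0"
  shows "residue (\<lambda>t. 1 / f t) z = fls_residue (inverse (fps_to_fls (taylor_fps (\<lambda>s. f (z + s)) 0)))"
proof -
  have hol': "(\<lambda>s. f (z + s)) holomorphic_on ball 0 \<epsilon>"
  proof -
    have "(\<lambda>s. z + s) ` ball 0 \<epsilon> \<subseteq> ball z \<epsilon>" by (auto simp: dist_norm)
    then show ?thesis
      by (intro holomorphic_on_compose_gen[OF _ hol, unfolded o_def]) (auto intro!: holomorphic_intros)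
  qed
  have "(\<lambda>s. f (z + s)) has_fps_expansion fps_expansion (\<lambda>s. f (z + s)) 0"
    by (rule has_fps_expansion_fps_expansion[OF _ _ hol']) (use \<epsilon> in auto)
  moreover have "fps_expansion (\<lambda>s. f (z + s)) 0 = taylor_fps (\<lambda>s. f (z + s)) 0"
    by (simp add: fps_expansion_def taylor_fps_def)
  ultimately have "(\<lambda>s. f (z + s)) has_fps_expansion taylor_fps (\<lambda>s. f (z + s)) 0" by simp
  then have "(\<lambda>s. inverse (f (z + s))) has_laurent_expansion inverse (fps_to_fls (taylor_fps (\<lambda>s. f (z + s)) 0))"
    by (intro has_laurent_expansion_inverse has_laurent_expansion_fps)
  then have "(\<lambda>s. 1 / f (z + s)) has_laurent_expansion inverse (fps_to_fls (taylor_fps (\<lambda>s. f (z + s)) 0))"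
    by (simp add: inverse_eq_divide)
  then show ?thesis by (rule has_laurent_expansion_residue)
qed



lemma slice_holo:
  fixes g :: "complex \<times> (complex^'n) \<Rightarrow> complex"
  assumes cg: "cholo_on S g" and p: "p \<in> S"
  obtains \<epsilon> where "\<epsilon> > 0" "(\<lambda>t. g (t, snd p)) holomorphic_on ball (fst p) \<epsilon>"
proof -
  obtain \<epsilon> where \<epsilon>: "\<epsilon> > 0" "ball p \<epsilon> \<subseteq> S" using cholo_open[OF cg] p open_contains_ball by blast
  obtain Gd where Gd: "\<And>P. P \<in> S \<Longrightarrow> (g has_derivative Gd P) (at P)"
     "\<And>P c v. P \<in> S \<Longrightarrow> Gd P (cscale c v) = c * Gd P v" using cholo_Gd[OF cg] by blast
  have "(\<lambda>t. g (t, snd p)) holomorphic_on ball (fst p) \<epsilon>"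
  proof (subst holomorphic_on_open)
    show "open (ball (fst p) \<epsilon>)" by simp
    show "\<forall>t\<in>ball (fst p) \<epsilon>. \<exists>f'. ((\<lambda>t. g (t, snd p)) has_field_derivative f') (at t)"
    proof
      fix t assume t: "t \<in> ball (fst p) \<epsilon>"
      have "dist p (t, snd p) = dist (fst p) t"
        by (cases p) (simp add: dist_Pair_Pair)
      then have "(t, snd p) \<in> S" using t \<epsilon> by auto
      then show "\<exists>f'. ((\<lambda>t. g (t, snd p)) has_field_derivative f') (at t)"
        using slice_deriv Gd by blast
    qed
  qed
  then show ?thesis using that \<epsilon> by blast
qed

lemma ordat_facts:
  fixes g :: "complex \<times> (complex^'n) \<Rightarrow> complex"
  assumes cg: "cholo_on S g" and pS: "p \<in> S" and fx: "g p = fst p" and px: "partial_x g p = 1"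
    and nu: "nu g p = enat \<nu>"
  shows "\<nu> \<ge> 2" "(deriv^^\<nu>) (\<lambda>t. g (t, snd p)) (fst p) \<noteq> 0"
    "\<And>j. 2 \<le> j \<Longrightarrow> j < \<nu> \<Longrightarrow> (deriv^^j) (\<lambda>t. g (t, snd p)) (fst p) = 0"
proof -
  obtain \<epsilon> where \<epsilon>: "\<epsilon> > 0" and hol: "(\<lambda>t. g (t, snd p)) holomorphic_on ball (fst p) \<epsilon>"
    using slice_holo[OF cg pS] by blast
  define \<phi> where "\<phi> = (\<lambda>t. g (t, snd p) - t)"
  have hd: "(deriv^^k) \<phi> (fst p) = (deriv^^k) (\<lambda>t. g (t, snd p)) (fst p) - (deriv^^k) (\<lambda>t. t) (fst p)" for k
    unfolding \<phi>_def by (rule higher_deriv_diff[OF hol]) (use \<epsilon> in \<open>auto intro: holomorphic_intros\<close>)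
  have o: "ordat \<phi> (fst p) = enat \<nu>" using nu unfolding nu_def \<phi>_def by simp
  have ex: "\<exists>k. (deriv ^^ k) \<phi> (fst p) \<noteq> 0"
  proof (rule ccontr)
    assume "\<not> ?thesis"
    then have "ordat \<phi> (fst p) = \<infinity>" unfolding ordat_def by simp
    then show False using o by simp
  qed
  have \<nu>def: "\<nu> = (LEAST k. (deriv ^^ k) \<phi> (fst p) \<noteq> 0)"
    using o ex unfolding ordat_def by simp
  have nz: "(deriv ^^ \<nu>) \<phi> (fst p) \<noteq> 0" unfolding \<nu>def by (rule LeastI_ex[OF ex])
  have z: "(deriv ^^ k) \<phi> (fst p) = 0" if "k < \<nu>" for k
    using not_less_Least[of k "\<lambda>k. (deriv ^^ k) \<phi> (fst p) \<noteq> 0"] that unfolding \<nu>def by blast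
  have d0: "(deriv ^^ 0) \<phi> (fst p) = 0" using fx by (simp add: \<phi>_def)
  have d1: "(deriv ^^ 1) \<phi> (fst p) = 0"
  proof -
    have "(deriv ^^ 1) \<phi> (fst p) = deriv (\<lambda>t. g (t, snd p)) (fst p) - 1" using hd[of 1] by simp
    also have "deriv (\<lambda>t. g (t, snd p)) (fst p) = partial_x g p" by (simp add: partial_x_def)
    finally show ?thesis using px by simp
  qed
  show \<nu>2: "\<nu> \<ge> 2"
  proof (rule ccontr)
    assume "\<not> \<nu> \<ge> 2"
    then have "\<nu> = 0 \<or> \<nu> = 1" by auto
    then show False using nz d0 d1 by auto
  qed
  show "(deriv^^\<nu>) (\<lambda>t. g (t, snd p)) (fst p) \<noteq> 0" using nz hd[of \<nu>] \<nu>2 by simp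
  show "\<And>j. 2 \<le> j \<Longrightarrow> j < \<nu> \<Longrightarrow> (deriv^^j) (\<lambda>t. g (t, snd p)) (fst p) = 0"
    using z hd by simp
qed

lemma taylor_coeff:
  fixes g :: "complex \<times> (complex^'n) \<Rightarrow> complex"
  assumes cg: "cholo_on S g" and pS: "p \<in> S" and j: "j \<ge> 1"
  shows "fps_nth (taylor_fps (\<lambda>s. g (fst p + s, snd p) - fst p) 0) j = (deriv^^j) (\<lambda>t. g (t, snd p)) (fst p) / fact j"
proof -
  obtain \<epsilon> where \<epsilon>: "\<epsilon> > 0" and hol: "(\<lambda>t. g (t, snd p)) holomorphic_on ball (fst p) \<epsilon>"
    using slice_holo[OF cg pS] by blast
  have hol': "(\<lambda>s. g (fst p + s, snd p)) holomorphic_on ball 0 \<epsilon>"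
  proof -
    have "(\<lambda>s. fst p + s) ` ball 0 \<epsilon> \<subseteq> ball (fst p) \<epsilon>" by (auto simp: dist_norm)
    then show ?thesis
      by (intro holomorphic_on_compose_gen[OF _ hol, unfolded o_def]) (auto intro!: holomorphic_intros)
  qed
  have "(deriv ^^ j) (\<lambda>s. g (fst p + s, snd p) - fst p) 0 = (deriv ^^ j) (\<lambda>s. g (fst p + s, snd p)) 0 - (deriv ^^ j) (\<lambda>s. fst p) 0"
    by (rule higher_deriv_diff[OF hol']) (use \<epsilon> in \<open>auto intro: holomorphic_intros\<close>)
  also have "(deriv ^^ j) (\<lambda>s. fst p) 0 = 0" using j by simp
  also have "(deriv ^^ j) (\<lambda>s. g (fst p + s, snd p)) 0 = (deriv ^^ j) (\<lambda>s. g (1 * s + fst p, snd p)) 0"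
    by (simp add: add.commute)
  also have "\<dots> = 1 ^ j * (deriv ^^ j) (\<lambda>t. g (t, snd p)) (1 * 0 + fst p)"
    by (rule higher_deriv_compose_linear'[OF hol, where S="ball 0 \<epsilon>"]) (use \<epsilon> in \<open>auto simp: dist_norm\<close>)
  finally have E: "(deriv ^^ j) (\<lambda>s. g (fst p + s, snd p) - fst p) 0 = 1 ^ j * (deriv ^^ j) (\<lambda>t. g (t, snd p)) (1 * 0 + fst p) - 0" .
  show ?thesis unfolding taylor_fps_def fps_nth_Abs_fps E by simp
qed



lemma Wp_cong: "(\<forall>i\<le>n. c i = c' i) \<Longrightarrow> Wp c n = Wp c' n"
proof (induction n rule: less_induct)
  case (less n)
  show ?case
  proof (cases n)
    case 0
    then show ?thesis by simp
  next
    case (Suc m)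
    have "Wp c (Suc m - i) = Wp c' (Suc m - i)" if "i \<in> {1..Suc m}" for i
      using less.IH[of "Suc m - i"] less.prems that Suc by auto
    moreover have "c i = c' i" if "i \<in> {1..Suc m}" for i
      using less.prems that Suc by auto
    moreover have "c 0 = c' 0" using less.prems by auto
    ultimately have "(\<Sum>i\<in>{1..Suc m}. c i * c 0 ^ (i - 1) * Wp c (Suc m - i)) =
        (\<Sum>i\<in>{1..Suc m}. c' i * c' 0 ^ (i - 1) * Wp c' (Suc m - i))"
      by (intro sum.cong) auto
    then show ?thesis unfolding Suc Wp.simps(2) by simp
  qed
qed

lemma nu0_attained:
  fixes g :: "complex \<times> (complex^'n) \<Rightarrow> complex"
  assumes nu0: "nu0 g \<gamma> = enat \<nu>" and g0: "0 \<in> \<gamma>" and d: "d > 0"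
  shows "\<exists>p\<in>\<gamma> \<inter> ball 0 d. nu g p = enat \<nu>"
proof -
  define I where "I d = (INF P\<in>\<gamma> \<inter> ball 0 d. nu g P)" for d :: real
  have S: "Sup (I ` {0<..}) = enat \<nu>" using nu0 by (simp add: nu0_def I_def)
  have ne: "I ` {0<..} \<noteq> {}" by auto
  have fin: "finite (I ` {0<..})"
  proof (rule ccontr)
    assume "\<not> ?thesis"
    then have "Sup (I ` {0<..}) = \<infinity>" using ne by (simp add: Sup_enat_def)
    then show False using S by simp
  qed
  have "Max (I ` {0<..}) = enat \<nu>" using S fin ne by (simp add: Sup_enat_def)
  then have "enat \<nu> \<in> I ` {0<..}" using Max_in[OF fin ne] by simp
  then obtain d0 where d0: "d0 > 0" "I d0 = enat \<nu>" by auto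
  define d' where "d' = min d d0"
  have d'pos: "d' > 0" using d d0 by (simp add: d'_def)
  have "I d0 \<le> I d'"
    unfolding I_def by (rule INF_superset_mono) (auto simp: d'_def)
  moreover have "I d' \<le> enat \<nu>" using S SUP_upper[of d' "{0<..}" I] d'pos by simp
  ultimately have Id': "I d' = enat \<nu>" using d0 by simp
  have ne2: "nu g ` (\<gamma> \<inter> ball 0 d') \<noteq> {}" using g0 d'pos by auto
  have "I d' = (LEAST x. x \<in> nu g ` (\<gamma> \<inter> ball 0 d'))"
    unfolding I_def Inf_enat_def using ne2 by simp
  then have "enat \<nu> \<in> nu g ` (\<gamma> \<inter> ball 0 d')"
    using Id' LeastI_ex[of "\<lambda>x. x \<in> nu g ` (\<gamma> \<inter> ball 0 d')"] ne2 by auto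
  then obtain p where "p \<in> \<gamma> \<inter> ball 0 d'" "nu g p = enat \<nu>" by auto
  moreover have "ball 0 d' \<subseteq> ball (0::complex \<times> (complex^'n)) d" by (auto simp: d'_def)
  ultimately show ?thesis by blast
qed



theorem mainTheorem6:
  fixes g :: "complex \<times> (complex^'n) \<Rightarrow> complex" and r :: real
    and \<gamma> :: "(complex \<times> (complex^'n)) set"
  assumes "r > 0" and "cholo_on (ball 0 r) g" and "g 0 = 0" and "partial_x g 0 = 1"
    and "irreducible_component_germ \<gamma> {p \<in> ball 0 r. g p = fst p}"
    and "\<not> fibered_germ \<gamma>"
  shows "\<exists>A B e. e > 0 \<and> cholo_on (ball 0 e) A \<and> cholo_on (ball 0 e) B \<and>
           (\<forall>d>0. \<exists>p\<in>\<gamma> \<inter> ball 0 d. B p \<noteq> 0) \<and>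
           (\<forall>P\<in>\<gamma> \<inter> ball 0 e. \<forall>\<rho>. Res_rel g \<gamma> P \<rho> \<and> B P \<noteq> 0 \<longrightarrow> \<rho> = A P / B P)"
proof -
  note r = assms(1) and cg = assms(2) and px0 = assms(4)
  define Z where "Z = {p \<in> ball 0 r. g p = fst p}"
  have irr: "irreducible_component_germ \<gamma> Z" using assms(5) by (simp add: Z_def)
  obtain eZ where eZ: "eZ > 0" "\<gamma> \<inter> ball 0 eZ \<subseteq> Z"
    using irr unfolding irreducible_component_germ_def germ_sub_def by blast
  have g0: "0 \<in> \<gamma>" using irr unfolding irreducible_component_germ_def irreducible_germ_def by blast
  have cpx: "cholo_on (ball 0 r) (partial_x g)" by (rule partial_x_cholo[OF cg])
  show ?thesis
  proof (cases "unipotent_comp g \<gamma>")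
    case False
    have "continuous_on (ball 0 r) (partial_x g)" by (rule cholo_continuous[OF cpx])
    then have "isCont (partial_x g) 0" using r by (simp add: continuous_on_eq_continuous_at)
    then obtain e1 where e1: "e1 > 0" "\<And>P. dist P 0 < e1 \<Longrightarrow> dist (partial_x g P) (partial_x g 0) < 1"
      unfolding continuous_at_eps_delta by (metis zero_less_one)
    define e where "e = min r e1"
    have e: "e > 0" using r e1 by (simp add: e_def)
    have inb: "partial_x g P \<in> ball 1 1" if "P \<in> ball 0 e" for P
      using e1(2)[of P] that px0 by (simp add: e_def dist_commute)
    have Ln_hol: "Ln holomorphic_on ball 1 1"
    proof (rule holomorphic_on_Ln)
      show "ball (1::complex) 1 \<inter> \<real>\<^sub>\<le>\<^sub>0 = {}"
      proof (rule ccontr)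
        assume "ball (1::complex) 1 \<inter> \<real>\<^sub>\<le>\<^sub>0 \<noteq> {}"
        then obtain z :: complex where z: "z \<in> ball 1 1" "z \<in> \<real>\<^sub>\<le>\<^sub>0" by blast
        have "Re z \<le> 0" using z(2) by (auto simp: complex_nonpos_Reals_iff)
        moreover have "\<bar>Re (1 - z)\<bar> < 1"
          using z(1) abs_Re_le_cmod[of "1 - z"] by (simp add: dist_norm)
        ultimately show False by simp
      qed
    qed
    define A where "A = (\<lambda>P::complex \<times> (complex^'n). (1::complex))"
    define B where "B = (\<lambda>P. Ln (partial_x g P))"
    have cA: "cholo_on (ball 0 e) A" unfolding A_def by (rule cholo_const) simp
    have cB: "cholo_on (ball 0 e) B" unfolding B_def
      by (rule cholo_compose[OF cholo_subset[OF cpx] Ln_hol]) (use inb in \<open>auto simp: e_def\<close>)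
    have Lnnz: "Ln (partial_x g P) \<noteq> 0" if "P \<in> ball 0 e" "partial_x g P \<noteq> 1" for P
    proof
      assume L0: "Ln (partial_x g P) = 0"
      have "partial_x g P \<noteq> 0" using inb[OF that(1)] by (auto simp: dist_norm)
      then have "partial_x g P = exp (Ln (partial_x g P))" by simp
      then show False using L0 that(2) by simp
    qed
    have pts: "\<forall>d>0. \<exists>p\<in>\<gamma> \<inter> ball 0 d. B p \<noteq> 0"
    proof (intro allI impI)
      fix d :: real assume d: "d > 0"
      have "\<not> (\<forall>Q\<in>\<gamma> \<inter> ball 0 (min d e). partial_x g Q = 1)"
        using False d e unfolding unipotent_comp_def by (metis min_less_iff_conj)
      then obtain Q where Q: "Q \<in> \<gamma> \<inter> ball 0 (min d e)" "partial_x g Q \<noteq> 1" by blast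
      then have "B Q \<noteq> 0" unfolding B_def using Lnnz by auto
      then show "\<exists>p\<in>\<gamma> \<inter> ball 0 d. B p \<noteq> 0" using Q by auto
    qed
    have res: "\<forall>P\<in>\<gamma> \<inter> ball 0 e. \<forall>\<rho>. Res_rel g \<gamma> P \<rho> \<and> B P \<noteq> 0 \<longrightarrow> \<rho> = A P / B P"
      using False by (auto simp: Res_rel_def A_def B_def)
    show ?thesis using e cA cB pts res by blast
  next
    case True
    then obtain eu where eu: "eu > 0" "\<And>Q. Q \<in> \<gamma> \<inter> ball 0 eu \<Longrightarrow> partial_x g Q = 1"
      unfolding unipotent_comp_def by blast
    show ?thesis
    proof (cases "nu0 g \<gamma> = \<infinity>")
      case True
      have res: "\<forall>P\<in>\<gamma> \<inter> ball 0 r. \<forall>\<rho>. Res_rel g \<gamma> P \<rho> \<and> (\<lambda>_. 1::complex) P \<noteq> 0 \<longrightarrow> \<rho> = (\<lambda>_. 0) P / (\<lambda>_. 1) P"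
        using \<open>unipotent_comp g \<gamma>\<close> True by (auto simp: Res_rel_def unip_res_def)
      have pts: "\<forall>d>0. \<exists>p\<in>\<gamma> \<inter> ball 0 d. (\<lambda>_. 1::complex) p \<noteq> 0"
      proof (intro allI impI)
        fix d :: real assume "d > 0"
        then have "0 \<in> \<gamma> \<inter> ball 0 d" using g0 by simp
        then show "\<exists>p\<in>\<gamma> \<inter> ball 0 d. (\<lambda>_. 1::complex) p \<noteq> 0" by (intro bexI[of _ 0]) simp_all
      qed
      show ?thesis
        by (rule exI[of _ "\<lambda>_. 0"], rule exI[of _ "\<lambda>_. 1"], rule exI[of _ r])
           (use r res pts in \<open>auto intro: cholo_const\<close>)
    next
      case False
      then obtain \<nu> where nu0: "nu0 g \<gamma> = enat \<nu>" by (cases "nu0 g \<gamma>") auto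
      define e where "e = min r (min eu eZ)"
      have e: "e > 0" using r eu eZ by (simp add: e_def)
      have inZ: "P \<in> ball 0 r" "g P = fst P" "partial_x g P = 1" if "P \<in> \<gamma> \<inter> ball 0 e" for P
        using that eZ(2) eu(2)[of P] by (auto simp: e_def Z_def)
      obtain p0 where p0: "p0 \<in> \<gamma> \<inter> ball 0 e" "nu g p0 = enat \<nu>" using nu0_attained[OF nu0 g0 e] by blast
      have \<nu>2: "\<nu> \<ge> 2" using ordat_facts(1)[OF cg inZ(1,2,3)[OF p0(1)] p0(2)] .
      define D where "D j P = (deriv^^j) (\<lambda>t. g (t, snd P)) (fst P)" for j P
      define a where "a P j = D j P * (1 / fact j)" for P j
      define cP where "cP P i = (if i = \<nu>-1 then a P (2*\<nu>-1) - of_nat \<nu> * (a P \<nu>)^2/2 else a P (\<nu>+i))" for P i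
      define A where "A P = Wp (cP P) (\<nu>-1)" for P
      define B where "B P = (a P \<nu>)^\<nu>" for P
      have oe: "open (ball (0::complex \<times> (complex^'n)) e)" by simp
      have sub: "ball 0 e \<subseteq> ball (0::complex \<times> (complex^'n)) r" by (auto simp: e_def)
      have cD: "cholo_on (ball 0 e) (D j)" for j
        unfolding D_def by (rule cholo_subset[OF cholo_Dk[OF cg] oe sub])
      have ca: "cholo_on (ball 0 e) (\<lambda>P. a P j)" for j
        unfolding a_def by (rule cholo_mult[OF cD cholo_const[OF oe]])
      have ccP: "cholo_on (ball 0 e) (\<lambda>P. cP P i)" for i
      proof (cases "i = \<nu>-1")
        case True
        have "cholo_on (ball 0 e) (\<lambda>P. a P (2*\<nu>-1) - (of_nat \<nu> / 2) * (a P \<nu>)^2)"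
          by (rule cholo_diff[OF ca cholo_mult[OF cholo_const[OF oe] cholo_power[OF ca]]])
        moreover have "(\<lambda>P. a P (2*\<nu>-1) - (of_nat \<nu> / 2) * (a P \<nu>)^2) = (\<lambda>P. cP P i)"
          using True by (simp add: cP_def fun_eq_iff)
        ultimately show ?thesis by simp
      next
        case False
        then have "(\<lambda>P. cP P i) = (\<lambda>P. a P (\<nu>+i))" by (simp add: cP_def fun_eq_iff)
        then show ?thesis using ca by simp
      qed
      have cA: "cholo_on (ball 0 e) A" unfolding A_def by (rule cholo_Wp[OF oe ccP])
      have cB: "cholo_on (ball 0 e) B" unfolding B_def by (rule cholo_power[OF ca])
      have pts: "\<forall>d>0. \<exists>p\<in>\<gamma> \<inter> ball 0 d. B p \<noteq> 0"
      proof (intro allI impI)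
        fix d :: real assume d: "d > 0"
        obtain p where p: "p \<in> \<gamma> \<inter> ball 0 (min d e)" "nu g p = enat \<nu>"
          using nu0_attained[OF nu0 g0, of "min d e"] d e by auto
        have pe: "p \<in> \<gamma> \<inter> ball 0 e" using p by auto
        have "D \<nu> p \<noteq> 0" unfolding D_def using ordat_facts(2)[OF cg inZ(1,2,3)[OF pe] p(2)] .
        then have "B p \<noteq> 0" by (simp add: B_def a_def)
        then show "\<exists>p\<in>\<gamma> \<inter> ball 0 d. B p \<noteq> 0" using p by auto
      qed
      have res: "\<forall>P\<in>\<gamma> \<inter> ball 0 e. \<forall>\<rho>. Res_rel g \<gamma> P \<rho> \<and> B P \<noteq> 0 \<longrightarrow> \<rho> = A P / B P"
      proof (intro ballI allI impI)
        fix P \<rho> assume P: "P \<in> \<gamma> \<inter> ball 0 e" and R: "Res_rel g \<gamma> P \<rho> \<and> B P \<noteq> 0"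
        have U: "unip_res g \<gamma> P \<rho>" using R \<open>unipotent_comp g \<gamma>\<close> by (simp add: Res_rel_def)
        have nuP: "nu g P = enat \<nu>" using U nu0 by (simp add: unip_res_def)
        obtain f \<epsilon> L h where fe: "\<epsilon> > 0" "f holomorphic_on ball (fst P) \<epsilon>"
          and L01: "fps_nth L 0 = 0" "fps_nth L 1 = 0"
          and fl: "flow1 L = taylor_fps (\<lambda>s. g (fst P + s, snd P) - fst P) 0"
          and h01: "fps_nth h 0 = 0" "fps_nth h 1 \<noteq> 0"
          and conj: "fps_compose L h = fps_deriv h * taylor_fps (\<lambda>s. f (fst P + s)) 0"
          and \<rho>: "\<rho> = residue (\<lambda>t. 1 / f t) (fst P)"
          using U unfolding unip_res_def by blast
        define T where "T = taylor_fps (\<lambda>s. g (fst P + s, snd P) - fst P) 0"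
        have Ta: "fps_nth T j = a P j" if "j \<ge> 1" for j
          unfolding T_def a_def D_def using taylor_coeff[OF cg inZ(1)[OF P] that] by simp
        have Dz: "D j P = 0" if "2 \<le> j" "j < \<nu>" for j
          unfolding D_def using ordat_facts(3)[OF cg inZ(1,2,3)[OF P] nuP] that .
        have Dnz: "D \<nu> P \<noteq> 0" unfolding D_def using ordat_facts(2)[OF cg inZ(1,2,3)[OF P] nuP] .
        have Tz: "fps_nth T j = 0" if "2 \<le> j" "j < \<nu>" for j
          using Ta[of j] Dz[OF that] that by (simp add: a_def)
        have T\<nu>: "fps_nth T \<nu> \<noteq> 0" using Ta[of \<nu>] Dnz \<nu>2 by (simp add: a_def)
        have fT: "flow1 L = T" using fl by (simp add: T_def)
        have FM1: "ordge L \<nu>" using L01 fT \<nu>2 Tz T\<nu> by (rule flow1_main(1))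
        have LT: "fps_nth L (\<nu>+i) = cP P i" if "i < \<nu>" for i
        proof -
          have "fps_nth L (\<nu>+i) = (if i = \<nu>-1 then fps_nth T (2*\<nu>-1) - of_nat \<nu> * (fps_nth T \<nu>)^2/2 else fps_nth T (\<nu>+i))"
            using L01 fT \<nu>2 Tz T\<nu> that by (rule flow1_main(2))
          then show ?thesis using \<nu>2 by (simp add: cP_def Ta)
        qed
        have L\<nu>: "fps_nth L \<nu> \<noteq> 0"
        proof -
          have "fps_nth L (\<nu>+0) = cP P 0" using LT[of 0] \<nu>2 by simp
          then have "fps_nth L \<nu> = a P \<nu>" using \<nu>2 by (simp add: cP_def)
          then show ?thesis using Dnz by (simp add: a_def)
        qed
        have Lnz: "L \<noteq> 0" using L\<nu> by (metis fps_zero_nth)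
        have sdL: "subdegree L = \<nu>"
          by (rule subdegreeI[OF L\<nu>]) (use FM1 in \<open>simp add: ordge_def\<close>)
        have "\<rho> = fls_residue (inverse (fps_to_fls (taylor_fps (\<lambda>s. f (fst P + s)) 0)))"
          unfolding \<rho> by (rule res_analytic[OF fe(2) fe(1)])
        also have "\<dots> = fps_nth (inverse (fps_shift (subdegree L) L)) (subdegree L - 1)"
          by (rule res_formula[OF L01(1) Lnz h01 conj])
        also have "fps_shift (subdegree L) L = Abs_fps (\<lambda>i. fps_nth L (\<nu>+i))"
          by (simp add: sdL fps_eq_iff add.commute)
        also have "fps_nth (inverse (Abs_fps (\<lambda>i. fps_nth L (\<nu>+i)))) (subdegree L - 1)
            = Wp (\<lambda>i. fps_nth L (\<nu>+i)) (\<nu>-1) / (fps_nth L (\<nu>+0)) ^ Suc (\<nu>-1)"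
          unfolding sdL by (rule Wp_inverse) (use L\<nu> in simp)
        also have "Wp (\<lambda>i. fps_nth L (\<nu>+i)) (\<nu>-1) = A P"
          unfolding A_def by (rule Wp_cong) (use LT \<nu>2 in auto)
        also have "(fps_nth L (\<nu>+0)) ^ Suc (\<nu>-1) = B P"
        proof -
          have "fps_nth L (\<nu>+0) = a P \<nu>" using LT[of 0] \<nu>2 by (simp add: cP_def)
          moreover have "Suc (\<nu>-1) = \<nu>" using \<nu>2 by simp
          ultimately show ?thesis by (simp add: B_def)
        qed
        finally show "\<rho> = A P / B P" .
      qed
      show ?thesis using e cA cB pts res by blast
    qed
  qed
qed


end
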